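(* Let $\mathbb{F}$ be an algebraically closed field of characteristic zero. The following elements are indecomposable in $\mathcal{O}(\mathcal{N}_3^3)^{GL_3}$: (a) $\alpha_1\mathrm{tr}(Y_1^2Y_2^2Y_3)+\alpha_2\mathrm{tr}(Y_2^2Y_1^2Y_3)$ for any $\alpha_1,\alpha_2\in\mathbb{F}$ not both zero; (b) $\mathrm{tr}(Y_1^2Y_2^2Y_1Y_3)$; (c) $\mathrm{tr}(Y_1^2Y_2^2Y_3^2)$.
   Context: $\mathcal{N}_3^3$ is the set of triples $\underline{A}=(A_1,A_2,A_3)$ of nilpotent $3\times3$ matrices over $\mathbb{F}$, with $GL_3$ acting by simultaneous conjugation; $\mathcal{O}(\mathcal{N}_3^3)^{GL_3}$ is the algebra of $GL_3$-invariant polynomial functions on $\mathcal{N}_3^3$, graded by total degree in the matrix entries. $\mathrm{tr}(Y_{i_1}\cdots Y_{i_r})$ denotes the invariant $\underline{A}\mapsto\mathrm{tr}(A_{i_1}\cdots A_{i_r})$. A homogeneous invariant $f$ is decomposable if it is a polynomial in homogeneous invariants of strictly lower degree; otherwise it is indecomposable. *)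

theory Defs
  imports "HOL-Analysis.Analysis" "HOL-Computational_Algebra.Polynomial" "HOL-Library.Numeral_Type"
begin

definition alg_closed :: "'a::field itself \<Rightarrow> bool" where
  "alg_closed _ \<longleftrightarrow> (\<forall>p::'a poly. 0 < degree p \<longrightarrow> (\<exists>x. poly p x = 0))"

type_synonym 'a mat3 = "'a ^ 3 ^ 3"
type_synonym 'a triple = "'a mat3 \<times> 'a mat3 \<times> 'a mat3"

definition mat_nilpotent :: "'a::field mat3 \<Rightarrow> bool" where
  "mat_nilpotent A \<longleftrightarrow> (\<exists>k::nat. ((\<lambda>B. A ** B) ^^ k) (mat 1) = 0)"

definition nil_triples :: "'a::field triple set" where
  "nil_triples = {(A1, A2, A3). mat_nilpotent A1 \<and> mat_nilpotent A2 \<and> mat_nilpotent A3}"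

inductive_set gen_alg :: "('b \<Rightarrow> 'a::comm_ring_1) set \<Rightarrow> ('b \<Rightarrow> 'a) set"
  for G where
    const: "(\<lambda>_. c) \<in> gen_alg G"
  | gen: "g \<in> G \<Longrightarrow> g \<in> gen_alg G"
  | add: "f \<in> gen_alg G \<Longrightarrow> g \<in> gen_alg G \<Longrightarrow> (\<lambda>x. f x + g x) \<in> gen_alg G"
  | mult: "f \<in> gen_alg G \<Longrightarrow> g \<in> gen_alg G \<Longrightarrow> (\<lambda>x. f x * g x) \<in> gen_alg G"

definition coord_funs :: "('a::field triple \<Rightarrow> 'a) set" where
  "coord_funs = (\<Union>i j. {(\<lambda>T. fst T $ i $ j), (\<lambda>T. fst (snd T) $ i $ j), (\<lambda>T. snd (snd T) $ i $ j)})"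

text \<open>Polynomial functions in the matrix entries (their restrictions to N_3^3 form O(N_3^3)).\<close>
definition poly_funs :: "('a::field triple \<Rightarrow> 'a) set" where
  "poly_funs = gen_alg coord_funs"

definition scale_triple :: "'a::field \<Rightarrow> 'a triple \<Rightarrow> 'a triple" where
  "scale_triple t T = (case T of (A1, A2, A3) \<Rightarrow>
     ((\<chi> i j. t * A1 $ i $ j), (\<chi> i j. t * A2 $ i $ j), (\<chi> i j. t * A3 $ i $ j)))"

definition conj_triple :: "'a::field mat3 \<Rightarrow> 'a triple \<Rightarrow> 'a triple" where
  "conj_triple P T = (case T of (A1, A2, A3) \<Rightarrow>
     (P ** A1 ** matrix_inv P, P ** A2 ** matrix_inv P, P ** A3 ** matrix_inv P))"

definition hom_invariant :: "nat \<Rightarrow> ('a::field triple \<Rightarrow> 'a) \<Rightarrow> bool" where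
  "hom_invariant d f \<longleftrightarrow>
     f \<in> poly_funs \<and>
     (\<forall>P T. invertible P \<longrightarrow> T \<in> nil_triples \<longrightarrow> f (conj_triple P T) = f T) \<and>
     (\<forall>t T. T \<in> nil_triples \<longrightarrow> f (scale_triple t T) = t ^ d * f T)"

definition decomposable :: "nat \<Rightarrow> ('a::field triple \<Rightarrow> 'a) \<Rightarrow> bool" where
  "decomposable d f \<longleftrightarrow>
     (\<exists>h \<in> gen_alg {g. \<exists>e<d. hom_invariant e g}. \<forall>T \<in> nil_triples. f T = h T)"

definition indecomposable :: "('a::field triple \<Rightarrow> 'a) \<Rightarrow> bool" where
  "indecomposable f \<longleftrightarrow> (\<exists>d. hom_invariant d f \<and> \<not> decomposable d f)"

end

theory Submission
  imports Defs
begin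


section \<open>Polynomials as lists of (coefficient, exponent list)\<close>

definition mnm :: "(nat \<Rightarrow> 'a::comm_ring_1) \<Rightarrow> nat list \<Rightarrow> 'a" where
  "mnm u m = (\<Prod>i<length m. u i ^ (m!i))"

definition evalp :: "('a::comm_ring_1 \<times> nat list) list \<Rightarrow> (nat \<Rightarrow> 'a) \<Rightarrow> 'a" where
  "evalp L u = sum_list (map (\<lambda>(c,m). c * mnm u m) L)"

definition coeffp :: "('a::comm_ring_1 \<times> nat list) list \<Rightarrow> nat list \<Rightarrow> 'a" where
  "coeffp L a = sum_list (map (\<lambda>(c,m). if m = a then c else 0) L)"

definition wfl :: "nat \<Rightarrow> ('a \<times> nat list) list \<Rightarrow> bool" where
  "wfl n L \<longleftrightarrow> (\<forall>p\<in>set L. length (snd p) = n)"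

definition mulp :: "('a::comm_ring_1 \<times> nat list) list \<Rightarrow> ('a \<times> nat list) list \<Rightarrow> ('a \<times> nat list) list" where
  "mulp L1 L2 = concat (map (\<lambda>(c1,m1). map (\<lambda>(c2,m2). (c1*c2, map2 (+) m1 m2)) L2) L1)"

definition negp :: "('a::comm_ring_1 \<times> nat list) list \<Rightarrow> ('a \<times> nat list) list" where
  "negp L = map (\<lambda>(c,m). (-c, m)) L"

definition push :: "nat \<Rightarrow> (nat \<Rightarrow> nat) \<Rightarrow> nat list \<Rightarrow> nat list" where
  "push n' \<pi> m = map (\<lambda>j. \<Sum>i\<in>{i. i < length m \<and> \<pi> i = j}. m!i) [0..<n']"

definition substp :: "nat \<Rightarrow> (nat \<Rightarrow> nat) \<Rightarrow> (nat \<Rightarrow> 'a::comm_ring_1) \<Rightarrow> ('a \<times> nat list) list \<Rightarrow> ('a \<times> nat list) list" where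
  "substp n' \<pi> cs L = map (\<lambda>(c,m). (c * mnm cs m, push n' \<pi> m)) L"

lemma evalp_Nil[simp]: "evalp [] u = 0" by (simp add: evalp_def)
lemma evalp_Cons[simp]: "evalp ((c,m)#L) u = c * mnm u m + evalp L u" by (simp add: evalp_def)
lemma evalp_append[simp]: "evalp (L1 @ L2) u = evalp L1 u + evalp L2 u" by (simp add: evalp_def)
lemma coeffp_Nil[simp]: "coeffp [] a = 0" by (simp add: coeffp_def)
lemma coeffp_Cons[simp]: "coeffp ((c,m)#L) a = (if m = a then c else 0) + coeffp L a" by (simp add: coeffp_def)
lemma coeffp_append[simp]: "coeffp (L1 @ L2) a = coeffp L1 a + coeffp L2 a" by (simp add: coeffp_def)

lemma evalp_negp[simp]: "evalp (negp L) u = - evalp L u"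
  by (induction L) (auto simp: negp_def)
lemma coeffp_negp[simp]: "coeffp (negp L) a = - coeffp L a"
  by (induction L) (auto simp: negp_def)
lemma wfl_append[simp]: "wfl n (L1 @ L2) \<longleftrightarrow> wfl n L1 \<and> wfl n L2" by (auto simp: wfl_def)
lemma wfl_negp[simp]: "wfl n (negp L) \<longleftrightarrow> wfl n L" by (auto simp: wfl_def negp_def)
lemma wfl_Cons[simp]: "wfl n ((c,m)#L) \<longleftrightarrow> length m = n \<and> wfl n L" by (auto simp: wfl_def)
lemma wfl_Nil[simp]: "wfl n []" by (auto simp: wfl_def)

lemma coeffp_wrong_length: "wfl n L \<Longrightarrow> length a \<noteq> n \<Longrightarrow> coeffp L a = 0"
  by (induction L) (auto simp: wfl_def)

lemma mnm_Cons: "mnm u (k#m) = u 0 ^ k * mnm (\<lambda>i. u (Suc i)) m"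
  unfolding mnm_def length_Cons prod.lessThan_Suc_shift by simp

lemma mnm_add: "length m1 = length m2 \<Longrightarrow> mnm u (map2 (+) m1 m2) = mnm u m1 * mnm u m2"
  unfolding mnm_def by (simp add: power_add prod.distrib)

lemma evalp_mulp: "wfl n L1 \<Longrightarrow> wfl n L2 \<Longrightarrow> evalp (mulp L1 L2) u = evalp L1 u * evalp L2 u"
proof (induction L1)
  case Nil then show ?case by (simp add: mulp_def)
next
  case (Cons p L1)
  obtain c1 m1 where p: "p = (c1,m1)" by force
  have "evalp (map (\<lambda>(c2,m2). (c1*c2, map2 (+) m1 m2)) L2) u = c1 * mnm u m1 * evalp L2 u"
    using Cons.prems unfolding p
  proof (induction L2)
    case Nil then show ?case by simp
  next
    case (Cons q L2)
    obtain c2 m2 where q: "q = (c2,m2)" by force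
    from Cons show ?case by (auto simp: q mnm_add algebra_simps)
  qed
  moreover have "evalp (mulp (p#L1) L2) u = evalp (map (\<lambda>(c2,m2). (c1*c2, map2 (+) m1 m2)) L2) u + evalp (mulp L1 L2) u"
    by (simp add: mulp_def p)
  ultimately show ?case using Cons by (simp add: p algebra_simps)
qed

lemma wfl_mulp: "wfl n L1 \<Longrightarrow> wfl n L2 \<Longrightarrow> wfl n (mulp L1 L2)"
  by (force simp: wfl_def mulp_def)

lemma length_push[simp]: "length (push n' \<pi> m) = n'" by (simp add: push_def)

lemma mnm_push:
  assumes "\<forall>i<length m. \<pi> i < n'"
  shows "mnm v (push n' \<pi> m) * mnm cs m = mnm (\<lambda>i. cs i * v (\<pi> i)) m"
proof -
  have "mnm (\<lambda>i. cs i * v (\<pi> i)) m = mnm cs m * (\<Prod>i<length m. v (\<pi> i) ^ (m!i))"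
    unfolding mnm_def by (simp add: power_mult_distrib prod.distrib)
  moreover have "(\<Prod>i<length m. v (\<pi> i) ^ (m!i)) = (\<Prod>j<n'. \<Prod>i\<in>{x\<in>{..<length m}. \<pi> x = j}. v (\<pi> i) ^ (m!i))"
    by (rule prod.group[symmetric]) (use assms in auto)
  moreover have "(\<Prod>i\<in>{x\<in>{..<length m}. \<pi> x = j}. v (\<pi> i) ^ (m!i)) = v j ^ (\<Sum>i\<in>{i. i < length m \<and> \<pi> i = j}. m!i)" for j
  proof -
    have "(\<Prod>i\<in>{x\<in>{..<length m}. \<pi> x = j}. v (\<pi> i) ^ (m!i)) = (\<Prod>i\<in>{i. i < length m \<and> \<pi> i = j}. v j ^ (m!i))"
      by (rule prod.cong) auto
    also have "\<dots> = v j ^ (\<Sum>i\<in>{i. i < length m \<and> \<pi> i = j}. m!i)"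
      by (simp add: power_sum)
    finally show ?thesis .
  qed
  moreover have "mnm v (push n' \<pi> m) = (\<Prod>j<n'. v j ^ (\<Sum>i\<in>{i. i < length m \<and> \<pi> i = j}. m!i))"
    unfolding mnm_def push_def by simp
  ultimately show ?thesis by (simp add: mult.commute)
qed

lemma evalp_substp:
  assumes "wfl n L" "\<forall>i<n. \<pi> i < n'"
  shows "evalp (substp n' \<pi> cs L) v = evalp L (\<lambda>i. cs i * v (\<pi> i))"
  using assms
proof (induction L)
  case Nil then show ?case by (simp add: substp_def)
next
  case (Cons p L)
  obtain c m where p: "p = (c,m)" by force
  have "mnm v (push n' \<pi> m) * mnm cs m = mnm (\<lambda>i. cs i * v (\<pi> i)) m"
    by (rule mnm_push) (use Cons.prems in \<open>auto simp: p\<close>)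
  then show ?case using Cons by (simp add: substp_def p algebra_simps)
qed

lemma wfl_substp: "wfl n' (substp n' \<pi> cs L)"
  by (auto simp: wfl_def substp_def)

lemma coeffp_substp:
  "coeffp (substp n' \<pi> cs L) b = sum_list (map (\<lambda>(c,m). c * (if push n' \<pi> m = b then mnm cs m else 0)) L)"
  by (induction L) (auto simp: substp_def)

lemma sum_group:
  assumes "finite S" "\<forall>p\<in>set L. \<phi> (snd p) \<noteq> 0 \<longrightarrow> snd p \<in> S"
  shows "sum_list (map (\<lambda>(c,m). c * \<phi> m) L) = (\<Sum>a\<in>S. coeffp L a * \<phi> a)"
  using assms(2)
proof (induction L)
  case Nil then show ?case by simp
next
  case (Cons p L)
  obtain c m where p: "p = (c,m)" by force
  have "(\<Sum>a\<in>S. (if m = a then c else 0) * \<phi> a) = c * \<phi> m"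
  proof (cases "m \<in> S")
    case True
    have "(\<Sum>a\<in>S. (if m = a then c else 0) * \<phi> a) = (\<Sum>a\<in>S. if m = a then c * \<phi> a else 0)"
      by (rule sum.cong) auto
    then show ?thesis using assms(1) True by (simp add: sum.delta)
  next
    case False
    then have "\<phi> m = 0" using Cons.prems by (auto simp: p)
    moreover have "(\<Sum>a\<in>S. (if m = a then c else 0) * \<phi> a) = 0"
      using False by (intro sum.neutral) auto
    ultimately show ?thesis by simp
  qed
  then show ?case using Cons by (simp add: p algebra_simps sum.distrib)
qed




definition cons_fun :: "'a \<Rightarrow> (nat \<Rightarrow> 'a) \<Rightarrow> nat \<Rightarrow> 'a" where
  "cons_fun x w = (\<lambda>i. case i of 0 \<Rightarrow> x | Suc j \<Rightarrow> w j)"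

definition slicep :: "nat \<Rightarrow> ('a \<times> nat list) list \<Rightarrow> ('a \<times> nat list) list" where
  "slicep k L = map (\<lambda>(c,m). (c, tl m)) (filter (\<lambda>(c,m). hd m = k) L)"

definition polyof :: "('a::comm_ring_1 \<times> nat list) list \<Rightarrow> (nat \<Rightarrow> 'a) \<Rightarrow> 'a poly" where
  "polyof L w = sum_list (map (\<lambda>(c,m). monom (c * mnm w (tl m)) (hd m)) L)"

lemma poly_polyof: "wfl (Suc n) L \<Longrightarrow> poly (polyof L w) x = evalp L (cons_fun x w)"
proof (induction L)
  case Nil then show ?case by (simp add: polyof_def)
next
  case (Cons p L)
  obtain c m where p: "p = (c,m)" by force
  from Cons.prems have "length m = Suc n" by (simp add: p)
  then obtain k m' where m: "m = k # m'" by (cases m) auto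
  have "mnm (cons_fun x w) m = x ^ k * mnm w m'"
    by (simp add: m mnm_Cons cons_fun_def)
  then show ?case using Cons by (simp add: polyof_def p m poly_monom algebra_simps)
qed

lemma coeff_polyof: "wfl (Suc n) L \<Longrightarrow> coeff (polyof L w) k = evalp (slicep k L) w"
proof (induction L)
  case Nil then show ?case by (simp add: polyof_def slicep_def)
next
  case (Cons p L)
  obtain c m where p: "p = (c,m)" by force
  from Cons.prems have "length m = Suc n" by (simp add: p)
  then obtain k' m' where m: "m = k' # m'" by (cases m) auto
  show ?case using Cons by (simp add: polyof_def p m coeff_monom slicep_def)
qed

lemma wfl_slicep: "wfl (Suc n) L \<Longrightarrow> wfl n (slicep k L)"
  by (auto simp: wfl_def slicep_def)

lemma coeffp_slicep: "wfl (Suc n) L \<Longrightarrow> coeffp (slicep k L) a = coeffp L (k#a)"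
proof (induction L)
  case Nil then show ?case by (simp add: slicep_def)
next
  case (Cons p L)
  obtain c m where p: "p = (c,m)" by force
  from Cons.prems have "length m = Suc n" by (simp add: p)
  then obtain k' m' where m: "m = k' # m'" by (cases m) auto
  show ?case using Cons by (simp add: p m slicep_def)
qed

lemma evalp_zero_coeffp:
  fixes L :: "('a::field_char_0 \<times> nat list) list"
  assumes "wfl n L" "\<forall>u. evalp L u = 0"
  shows "coeffp L a = 0"
  using assms
proof (induction n arbitrary: L a)
  case 0
  then have "\<forall>p\<in>set L. snd p = []" by (auto simp: wfl_def)
  then have "evalp L u = coeffp L []" for u
    by (induction L) (auto simp: mnm_def)
  then show ?case using 0 coeffp_wrong_length[of 0 L a] by (cases "a = []") auto
next
  case (Suc n)
  show ?case
  proof (cases a)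
    case Nil then show ?thesis using Suc coeffp_wrong_length by fastforce
  next
    case (Cons k a')
    have "\<forall>w. evalp (slicep k L) w = 0"
    proof
      fix w
      have "\<forall>x. poly (polyof L w) x = 0" using Suc.prems by (simp add: poly_polyof)
      then have "polyof L w = 0" using poly_all_0_iff_0 by blast
      then have "coeff (polyof L w) k = 0" by simp
      then show "evalp (slicep k L) w = 0" using Suc.prems by (simp add: coeff_polyof)
    qed
    then have "coeffp (slicep k L) a' = 0"
      using Suc.IH[of "slicep k L"] Suc.prems wfl_slicep by blast
    then show ?thesis using Suc.prems by (simp add: Cons coeffp_slicep)
  qed
qed

lemma evalp_eq_coeffp:
  fixes L1 L2 :: "('a::field_char_0 \<times> nat list) list"
  assumes "wfl n L1" "wfl n L2" "\<forall>u. evalp L1 u = evalp L2 u"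
  shows "coeffp L1 a = coeffp L2 a"
proof -
  have "coeffp (L1 @ negp L2) a = 0"
    by (rule evalp_zero_coeffp[of n]) (use assms in auto)
  then show ?thesis by simp
qed

lemma coeffp_substp_group:
  assumes "finite S" "wfl n L"
    "\<And>m. length m = n \<Longrightarrow> push n' \<pi> m = b \<Longrightarrow> mnm cs m \<noteq> 0 \<Longrightarrow> m \<in> S"
    "\<And>m. m \<in> S \<Longrightarrow> push n' \<pi> m = b"
  shows "coeffp (substp n' \<pi> cs L) b = (\<Sum>a\<in>S. coeffp L a * mnm cs a)"
proof -
  have "coeffp (substp n' \<pi> cs L) b = (\<Sum>a\<in>S. coeffp L a * (if push n' \<pi> a = b then mnm cs a else 0))"
    unfolding coeffp_substp
    by (rule sum_group) (use assms in \<open>auto simp: wfl_def split: if_splits\<close>)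
  also have "\<dots> = (\<Sum>a\<in>S. coeffp L a * mnm cs a)"
    by (rule sum.cong) (use assms(4) in auto)
  finally show ?thesis .
qed

definition below :: "nat \<Rightarrow> nat list \<Rightarrow> nat list set" where
  "below n a = {b. length b = n \<and> (\<forall>i<n. b!i \<le> a!i)}"

lemma finite_below: "finite (below n a)"
proof -
  define M where "M = Max ((\<lambda>i. a!i) ` {..<n} \<union> {0})"
  have "below n a \<subseteq> {xs. set xs \<subseteq> {0..M} \<and> length xs = n}"
  proof
    fix b assume b: "b \<in> below n a"
    have "b!i \<le> M" if "i < n" for i
    proof -
      have "a!i \<le> M" unfolding M_def using that by (intro Max_ge) auto
      then show ?thesis using b that by (auto simp: below_def intro: le_trans)
    qed
    then show "b \<in> {xs. set xs \<subseteq> {0..M} \<and> length xs = n}"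
      using b by (auto simp: below_def in_set_conv_nth)
  qed
  then show ?thesis by (rule finite_subset) (rule finite_lists_length_eq, simp)
qed

lemma coeffp_mulp:
  assumes "wfl n L1" "wfl n L2" "length a = n"
  shows "coeffp (mulp L1 L2) a = (\<Sum>b\<in>below n a. coeffp L1 b * coeffp L2 (map2 (-) a b))"
proof -
  define \<phi> where "\<phi> m1 = (if m1 \<in> below n a then coeffp L2 (map2 (-) a m1) else 0)" for m1
  have inner0: "coeffp (map (\<lambda>(c2,m2). (c1*c2, map2 (+) m1 m2)) L2) a = c1 * (if m1 \<in> below n a then coeffp L2 (map2 (-) a m1) else 0)"
    if "length m1 = n" "wfl n L2" for c1 m1 L2
    using that(2)
  proof (induction L2)
    case Nil then show ?case by simp
  next
    case (Cons q L2)
    obtain c2 m2 where q: "q = (c2,m2)" by force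
    have lm2: "length m2 = n" using Cons.prems by (simp add: q)
    have eq: "map2 (+) m1 m2 = a \<longleftrightarrow> m1 \<in> below n a \<and> m2 = map2 (-) a m1"
    proof
      assume h: "map2 (+) m1 m2 = a"
      have "\<forall>i<n. m1!i \<le> a!i" using h that lm2 by auto
      moreover have "m2 = map2 (-) a m1"
        using h that lm2 by (auto intro!: nth_equalityI)
      ultimately show "m1 \<in> below n a \<and> m2 = map2 (-) a m1" using that by (auto simp: below_def)
    next
      assume h: "m1 \<in> below n a \<and> m2 = map2 (-) a m1"
      then show "map2 (+) m1 m2 = a" using that assms(3) by (auto simp: below_def intro!: nth_equalityI)
    qed
    have "coeffp (map (\<lambda>(c2,m2). (c1*c2, map2 (+) m1 m2)) (q#L2)) a
        = (if map2 (+) m1 m2 = a then c1*c2 else 0) + c1 * (if m1 \<in> below n a then coeffp L2 (map2 (-) a m1) else 0)"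
      using Cons by (simp add: q)
    also have "\<dots> = c1 * (if m1 \<in> below n a then coeffp L2 (map2 (-) a m1) else 0) + (if m1 \<in> below n a \<and> m2 = map2 (-) a m1 then c1*c2 else 0)"
      using eq by simp
    also have "\<dots> = c1 * (if m1 \<in> below n a then coeffp ((c2,m2)#L2) (map2 (-) a m1) else 0)"
    proof (cases "m1 \<in> below n a")
      case True then show ?thesis by (simp add: algebra_simps)
    next
      case False then show ?thesis by simp
    qed
    finally show ?case by (simp add: q)
  qed
  have inner: "coeffp (map (\<lambda>(c2,m2). (c1*c2, map2 (+) m1 m2)) L2) a = c1 * \<phi> m1"
    if "length m1 = n" for c1 m1
    using inner0[OF that assms(2)] by (simp add: \<phi>_def)
  have "coeffp (mulp L1 L2) a = sum_list (map (\<lambda>(c1,m1). c1 * \<phi> m1) L1)"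
    using assms(1)
  proof (induction L1)
    case Nil then show ?case by (simp add: mulp_def)
  next
    case (Cons p L1)
    obtain c1 m1 where p: "p = (c1,m1)" by force
    have "coeffp (mulp (p#L1) L2) a = coeffp (map (\<lambda>(c2,m2). (c1*c2, map2 (+) m1 m2)) L2) a + coeffp (mulp L1 L2) a"
      by (simp add: mulp_def p coeffp_def)
    then show ?case using Cons inner[of m1 c1] by (simp add: p)
  qed
  also have "\<dots> = (\<Sum>b\<in>below n a. coeffp L1 b * \<phi> b)"
    by (rule sum_group) (auto simp: finite_below \<phi>_def split: if_splits)
  also have "\<dots> = (\<Sum>b\<in>below n a. coeffp L1 b * coeffp L2 (map2 (-) a b))"
    by (rule sum.cong) (auto simp: \<phi>_def)
  finally show ?thesis .
qed




lemma mnm_replicate0[simp]: "mnm u (replicate n 0) = 1"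
  by (simp add: mnm_def)

lemma map2_minus_zero: "length a = n \<Longrightarrow> map2 (-) a (replicate n 0) = (a::nat list)"
  by (auto intro!: nth_equalityI)

lemma gen_good:
  fixes F :: "(nat \<Rightarrow> 'a::field_char_0) \<Rightarrow> 'b"
  assumes W: "W \<subseteq> {a. length a = n}" "replicate n 0 \<notin> W"
    and clos: "\<And>a b. a \<in> W \<Longrightarrow> b \<in> below n a \<Longrightarrow> b \<noteq> replicate n 0 \<Longrightarrow> b \<noteq> a \<Longrightarrow> b \<in> W \<or> map2 (-) a b \<in> W"
    and gens: "\<And>g. g \<in> G \<Longrightarrow> \<exists>L. wfl n L \<and> (\<forall>v. g (F v) = evalp L v) \<and> (\<forall>a\<in>W. coeffp L a = 0)"
    and h: "h \<in> gen_alg G"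
  shows "\<exists>L. wfl n L \<and> (\<forall>v. h (F v) = evalp L v) \<and> (\<forall>a\<in>W. coeffp L a = 0)"
  using h
proof (induction rule: gen_alg.induct)
  case (const c)
  show ?case
    by (rule exI[of _ "[(c, replicate n 0)]"]) (use W in auto)
next
  case (gen g)
  then show ?case using gens by blast
next
  case (add f g)
  then obtain L1 L2 where "wfl n L1" "\<forall>v. f (F v) = evalp L1 v" "\<forall>a\<in>W. coeffp L1 a = 0"
    "wfl n L2" "\<forall>v. g (F v) = evalp L2 v" "\<forall>a\<in>W. coeffp L2 a = 0" by blast
  then show ?case by (intro exI[of _ "L1 @ L2"]) auto
next
  case (mult f g)
  then obtain L1 L2 where L1: "wfl n L1" "\<forall>v. f (F v) = evalp L1 v" "\<forall>a\<in>W. coeffp L1 a = 0"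
    and L2: "wfl n L2" "\<forall>v. g (F v) = evalp L2 v" "\<forall>a\<in>W. coeffp L2 a = 0" by blast
  show ?case
  proof (intro exI[of _ "mulp L1 L2"] conjI ballI allI)
    show "wfl n (mulp L1 L2)" using L1 L2 by (simp add: wfl_mulp)
    show "f (F v) * g (F v) = evalp (mulp L1 L2) v" for v using L1 L2 by (simp add: evalp_mulp)
    fix a assume a: "a \<in> W"
    then have la: "length a = n" using W by auto
    have "coeffp (mulp L1 L2) a = (\<Sum>b\<in>below n a. coeffp L1 b * coeffp L2 (map2 (-) a b))"
      using L1 L2 la by (simp add: coeffp_mulp)
    also have "\<dots> = 0"
    proof (rule sum.neutral, rule ballI)
      fix b assume b: "b \<in> below n a"
      show "coeffp L1 b * coeffp L2 (map2 (-) a b) = 0"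
      proof (cases "b = replicate n 0")
        case True then show ?thesis using L2 a la by (simp add: map2_minus_zero)
      next
        case False
        show ?thesis
        proof (cases "b = a")
          case True then show ?thesis using L1 a by simp
        next
          case False2: False
          then show ?thesis using clos[OF a b False False2] L1 L2 by auto
        qed
      qed
    qed
    finally show "coeffp (mulp L1 L2) a = 0" .
  qed
qed

lemma push_id: "length m = n \<Longrightarrow> push n (\<lambda>i. i) m = m"
proof -
  assume l: "length m = n"
  have "{i. i < length m \<and> i = j} = {j}" if "j < n" for j using that l by auto
  then show ?thesis using l by (auto simp: push_def intro!: nth_equalityI)
qed

lemma coeffp_substp_id:
  assumes "wfl n L" "length a = n"
  shows "coeffp (substp n (\<lambda>i. i) cs L) a = coeffp L a * mnm cs a"
proof -
  have "coeffp (substp n (\<lambda>i. i) cs L) a = (\<Sum>b\<in>{a}. coeffp L b * mnm cs b)"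
    by (rule coeffp_substp_group) (use assms in \<open>auto simp: push_id\<close>)
  then show ?thesis by simp
qed

lemma evalp_substp_id:
  assumes "wfl n L"
  shows "evalp (substp n (\<lambda>i. i) cs L) v = evalp L (\<lambda>i. cs i * v i)"
  by (rule evalp_substp) (use assms in auto)

definition smulp :: "'a::comm_ring_1 \<Rightarrow> ('a \<times> nat list) list \<Rightarrow> ('a \<times> nat list) list" where
  "smulp c L = map (\<lambda>(d,m). (c*d, m)) L"

lemma evalp_smulp[simp]: "evalp (smulp c L) v = c * evalp L v"
  by (induction L) (auto simp: smulp_def algebra_simps)
lemma coeffp_smulp[simp]: "coeffp (smulp c L) a = c * coeffp L a"
  by (induction L) (auto simp: smulp_def algebra_simps)
lemma wfl_smulp[simp]: "wfl n (smulp c L) = wfl n L"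
  by (auto simp: wfl_def smulp_def)

lemma mnm_mult: "mnm (\<lambda>i. s i * t i) a = mnm s a * mnm t a"
  by (simp add: mnm_def power_mult_distrib prod.distrib)

lemma kill:
  fixes L :: "('a::field_char_0 \<times> nat list) list"
  assumes wf: "wfl n L"
    and hyp: "\<And>v. (\<forall>i\<in>Z. v i = 0) \<Longrightarrow> evalp L (\<lambda>i. s i * v i) = c * evalp L v"
    and la: "length a = n" and az: "\<forall>i\<in>Z. i < n \<longrightarrow> a!i = 0"
  shows "coeffp L a * mnm s a = c * coeffp L a"
proof -
  define zr where "zr i = (if i \<in> Z then 0 else (1::'a))" for i
  have mz: "mnm zr a = 1"
    unfolding mnm_def by (rule prod.neutral) (use az la in \<open>auto simp: zr_def\<close>)
  have "evalp (substp n (\<lambda>i. i) (\<lambda>i. s i * zr i) L) v = evalp (smulp c (substp n (\<lambda>i. i) zr L)) v" for v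
  proof -
    have "evalp (substp n (\<lambda>i. i) (\<lambda>i. s i * zr i) L) v = evalp L (\<lambda>i. s i * (zr i * v i))"
      using wf by (simp add: evalp_substp_id mult.assoc)
    also have "\<dots> = c * evalp L (\<lambda>i. zr i * v i)"
      by (rule hyp) (auto simp: zr_def)
    also have "\<dots> = evalp (smulp c (substp n (\<lambda>i. i) zr L)) v"
      using wf by (simp add: evalp_substp_id)
    finally show ?thesis .
  qed
  then have "coeffp (substp n (\<lambda>i. i) (\<lambda>i. s i * zr i) L) a = coeffp (smulp c (substp n (\<lambda>i. i) zr L)) a"
    by (intro evalp_eq_coeffp[of n]) (auto simp: wfl_substp)
  then show ?thesis using wf la by (simp add: coeffp_substp_id mnm_mult mz)
qed

section \<open>Matrices and linear families\<close>

definition smat :: "'a::field \<Rightarrow> 'a mat3 \<Rightarrow> 'a mat3" where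
  "smat c A = (\<chi> i j. c * A$i$j)"

definition linfam :: "nat \<Rightarrow> (nat \<Rightarrow> 'a::field triple) \<Rightarrow> (nat \<Rightarrow> 'a) \<Rightarrow> 'a triple" where
  "linfam n Ts u = ((\<Sum>k<n. smat (u k) (fst (Ts k))), (\<Sum>k<n. smat (u k) (fst (snd (Ts k)))),
                    (\<Sum>k<n. smat (u k) (snd (snd (Ts k)))))"

definition unitv :: "nat \<Rightarrow> nat \<Rightarrow> nat list" where
  "unitv n k = map (\<lambda>l. if l = k then 1 else 0) [0..<n]"

lemma mnm_unitv: "k < n \<Longrightarrow> mnm u (unitv n k) = u k"
proof -
  assume k: "k < n"
  have "mnm u (unitv n k) = (\<Prod>i<n. if i = k then u i else 1)"
    unfolding mnm_def unitv_def by (rule prod.cong) auto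
  then show ?thesis using k by (simp add: prod.delta)
qed

lemma coord_rep:
  fixes Ts :: "nat \<Rightarrow> 'a::field_char_0 triple"
  assumes "\<And>T. g T = sel T $ i $ j"
    and "\<And>u. sel (linfam n Ts u) = (\<Sum>k<n. smat (u k) (sel (Ts k)))"
  shows "\<exists>L. wfl n L \<and> (\<forall>v. g (linfam n Ts v) = evalp L v)"
proof (intro exI conjI allI)
  let ?L = "map (\<lambda>k. (sel (Ts k) $ i $ j, unitv n k)) [0..<n]"
  show "wfl n ?L" by (auto simp: wfl_def unitv_def)
  fix v
  have "evalp ?L v = (\<Sum>k\<leftarrow>[0..<n]. sel (Ts k) $ i $ j * mnm v (unitv n k))"
    unfolding evalp_def by (simp add: comp_def)
  also have "\<dots> = (\<Sum>k\<leftarrow>[0..<n]. sel (Ts k) $ i $ j * v k)"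
    by (rule arg_cong[where f=sum_list], rule map_cong) (auto simp: mnm_unitv)
  also have "\<dots> = (\<Sum>k<n. sel (Ts k) $ i $ j * v k)"
    by (simp add: sum_set_upt_conv_sum_list_nat[symmetric] atLeast0LessThan)
  also have "\<dots> = g (linfam n Ts v)"
    using assms by (simp add: smat_def mult.commute)
  finally show "g (linfam n Ts v) = evalp ?L v" by simp
qed

lemma poly_rep:
  fixes Ts :: "nat \<Rightarrow> 'a::field_char_0 triple"
  assumes "g \<in> poly_funs"
  shows "\<exists>L. wfl n L \<and> (\<forall>v. g (linfam n Ts v) = evalp L v)"
proof -
  have "\<exists>L. wfl n L \<and> (\<forall>v. g (linfam n Ts v) = evalp L v) \<and> (\<forall>a\<in>{}. coeffp L a = 0)"
  proof (rule gen_good[where W = "{}" and G = coord_funs])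
    fix g assume "g \<in> (coord_funs :: ('a triple \<Rightarrow> 'a) set)"
    then obtain i j where "g = (\<lambda>T. fst T $ i $ j) \<or> g = (\<lambda>T. fst (snd T) $ i $ j) \<or> g = (\<lambda>T. snd (snd T) $ i $ j)"
      unfolding coord_funs_def by blast
    then have "\<exists>L. wfl n L \<and> (\<forall>v. g (linfam n Ts v) = evalp L v)"
    proof (elim disjE)
      assume "g = (\<lambda>T. fst T $ i $ j)"
      then show ?thesis by (intro coord_rep[where sel=fst and i=i and j=j]) (auto simp: linfam_def)
    next
      assume "g = (\<lambda>T. fst (snd T) $ i $ j)"
      then show ?thesis by (intro coord_rep[where sel="\<lambda>T. fst (snd T)" and i=i and j=j]) (auto simp: linfam_def)
    next
      assume "g = (\<lambda>T. snd (snd T) $ i $ j)"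
      then show ?thesis by (intro coord_rep[where sel="\<lambda>T. snd (snd T)" and i=i and j=j]) (auto simp: linfam_def)
    qed
    then show "\<exists>L. wfl n L \<and> (\<forall>v. g (linfam n Ts v) = evalp L v) \<and> (\<forall>a\<in>{}. coeffp L a = 0)" by auto
  qed (use assms in \<open>auto simp: poly_funs_def\<close>)
  then show ?thesis by auto
qed




definition mk3 :: "'a::field \<Rightarrow> 'a \<Rightarrow> 'a \<Rightarrow> 'a \<Rightarrow> 'a \<Rightarrow> 'a \<Rightarrow> 'a \<Rightarrow> 'a \<Rightarrow> 'a \<Rightarrow> 'a mat3" where
  "mk3 a11 a12 a13 a21 a22 a23 a31 a32 a33 =
     vector [vector [a11, a12, a13], vector [a21, a22, a23], vector [a31, a32, a33]]"

lemma mk3_nth: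
  "mk3 a11 a12 a13 a21 a22 a23 a31 a32 a33 $ 1 $ 1 = a11"
  "mk3 a11 a12 a13 a21 a22 a23 a31 a32 a33 $ 1 $ 2 = a12"
  "mk3 a11 a12 a13 a21 a22 a23 a31 a32 a33 $ 1 $ 3 = a13"
  "mk3 a11 a12 a13 a21 a22 a23 a31 a32 a33 $ 2 $ 1 = a21"
  "mk3 a11 a12 a13 a21 a22 a23 a31 a32 a33 $ 2 $ 2 = a22"
  "mk3 a11 a12 a13 a21 a22 a23 a31 a32 a33 $ 2 $ 3 = a23"
  "mk3 a11 a12 a13 a21 a22 a23 a31 a32 a33 $ 3 $ 1 = a31"
  "mk3 a11 a12 a13 a21 a22 a23 a31 a32 a33 $ 3 $ 2 = a32"
  "mk3 a11 a12 a13 a21 a22 a23 a31 a32 a33 $ 3 $ 3 = a33"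
  by (simp_all add: mk3_def)

lemma mk3_eta: "(A::'a::field mat3) = mk3 (A$1$1) (A$1$2) (A$1$3) (A$2$1) (A$2$2) (A$2$3) (A$3$1) (A$3$2) (A$3$3)"
  by (simp add: vec_eq_iff forall_3 mk3_nth)

lemma mk3_eq_iff: "mk3 a11 a12 a13 a21 a22 a23 a31 a32 a33 = mk3 b11 b12 b13 b21 b22 b23 b31 b32 b33 \<longleftrightarrow>
   a11 = b11 \<and> a12 = b12 \<and> a13 = b13 \<and> a21 = b21 \<and> a22 = b22 \<and> a23 = b23 \<and> a31 = b31 \<and> a32 = b32 \<and> a33 = b33"
  by (simp add: vec_eq_iff forall_3 mk3_nth)

lemma mk3_mult:
  "mk3 a11 a12 a13 a21 a22 a23 a31 a32 a33 ** mk3 b11 b12 b13 b21 b22 b23 b31 b32 b33 =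
   mk3 (a11*b11 + a12*b21 + a13*b31) (a11*b12 + a12*b22 + a13*b32) (a11*b13 + a12*b23 + a13*b33)
       (a21*b11 + a22*b21 + a23*b31) (a21*b12 + a22*b22 + a23*b32) (a21*b13 + a22*b23 + a23*b33)
       (a31*b11 + a32*b21 + a33*b31) (a31*b12 + a32*b22 + a33*b32) (a31*b13 + a32*b23 + a33*b33)"
  by (simp add: vec_eq_iff forall_3 mk3_nth matrix_matrix_mult_def sum_3)

lemma mk3_add:
  "mk3 a11 a12 a13 a21 a22 a23 a31 a32 a33 + mk3 b11 b12 b13 b21 b22 b23 b31 b32 b33 =
   mk3 (a11+b11) (a12+b12) (a13+b13) (a21+b21) (a22+b22) (a23+b23) (a31+b31) (a32+b32) (a33+b33)"
  by (simp add: vec_eq_iff forall_3 mk3_nth)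

lemma smat_mk3:
  "smat c (mk3 a11 a12 a13 a21 a22 a23 a31 a32 a33) =
   mk3 (c*a11) (c*a12) (c*a13) (c*a21) (c*a22) (c*a23) (c*a31) (c*a32) (c*a33)"
  by (simp add: vec_eq_iff forall_3 mk3_nth smat_def)

lemma trace_mk3: "trace (mk3 a11 a12 a13 a21 a22 a23 a31 a32 a33) = a11 + a22 + a33"
  by (simp add: trace_def sum_3 mk3_nth)

lemma zero_mk3: "(0::'a::field mat3) = mk3 0 0 0 0 0 0 0 0 0"
  by (simp add: vec_eq_iff forall_3 mk3_nth)

lemma one_mk3: "(mat 1::'a::field mat3) = mk3 1 0 0 0 1 0 0 0 1"
  by (simp add: vec_eq_iff forall_3 mk3_nth mat_def)

lemmas mk3_simps = mk3_mult mk3_add smat_mk3 trace_mk3 mk3_eq_iff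




definition sc_triple :: "'a::field \<Rightarrow> 'a triple \<Rightarrow> 'a triple" where
  "sc_triple c T = (smat c (fst T), smat c (fst (snd T)), smat c (snd (snd T)))"

definition conj3 :: "'a::field mat3 \<Rightarrow> 'a mat3 \<Rightarrow> 'a triple \<Rightarrow> 'a triple" where
  "conj3 P Q T = (P ** fst T ** Q, P ** fst (snd T) ** Q, P ** snd (snd T) ** Q)"

lemma matrix_inv_eq:
  fixes P Q :: "'a::field mat3"
  assumes "P ** Q = mat 1" "Q ** P = mat 1"
  shows "matrix_inv P = Q"
proof -
  have ex: "\<exists>A'. P ** A' = mat 1 \<and> A' ** P = mat 1" using assms by blast
  define R where "R = matrix_inv P"
  have R: "P ** R = mat 1 \<and> R ** P = mat 1"
    unfolding R_def matrix_inv_def by (rule someI_ex[OF ex])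
  have "R = R ** (P ** Q)" using assms by simp
  also have "\<dots> = (R ** P) ** Q" by (simp add: matrix_mul_assoc)
  also have "\<dots> = Q" using R by simp
  finally show ?thesis by (simp add: R_def)
qed

lemma invertible_of:
  fixes P Q :: "'a::field mat3"
  shows "P ** Q = mat 1 \<Longrightarrow> Q ** P = mat 1 \<Longrightarrow> invertible P"
  unfolding invertible_def by blast

lemma conj_triple_eq:
  fixes P Q :: "'a::field mat3"
  assumes "P ** Q = mat 1" "Q ** P = mat 1"
  shows "conj_triple P T = conj3 P Q T"
  using matrix_inv_eq[OF assms] by (cases T) (simp add: conj_triple_def conj3_def)

lemma scale_triple_eq: "scale_triple t T = sc_triple t T"
  by (cases T) (simp add: scale_triple_def sc_triple_def smat_def)

lemma smat_sum: "smat c (\<Sum>k\<in>S. f k) = (\<Sum>k\<in>S. smat c (f k))"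
  by (induction S rule: infinite_finite_induct)
     (auto simp: smat_def vec_eq_iff algebra_simps)

lemma smat_smat: "smat c (smat d A) = smat (c*d) A"
  by (simp add: smat_def vec_eq_iff)

lemma smat_zero_left[simp]: "smat 0 A = 0"
  by (simp add: smat_def vec_eq_iff)
lemma smat_zero_right[simp]: "smat c 0 = 0"
  by (simp add: smat_def vec_eq_iff)

lemma mult_smat_left: "smat c A ** B = smat c (A ** B)"
  by (simp add: smat_def vec_eq_iff matrix_matrix_mult_def sum_distrib_left mult.assoc)
lemma mult_smat_right: "(A::'a::field mat3) ** smat c B = smat c (A ** B)"
  by (simp add: smat_def vec_eq_iff matrix_matrix_mult_def sum_distrib_left mult_ac)

lemma mult_sum_left: "(A::'a::field mat3) ** (\<Sum>k\<in>S. f k) = (\<Sum>k\<in>S. A ** f k)"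
  by (induction S rule: infinite_finite_induct) (auto simp: matrix_add_ldistrib)

lemma mult_sum_right: "(\<Sum>k\<in>S. f k) ** (A::'a::field mat3) = (\<Sum>k\<in>S. f k ** A)"
proof (induction S rule: infinite_finite_induct)
  case (insert x F)
  have "(f x + sum f F) ** A = f x ** A + sum f F ** A"
    by (simp add: vec_eq_iff matrix_matrix_mult_def sum.distrib algebra_simps)
  then show ?case using insert by simp
qed auto

lemma conj3_linfam: "conj3 P Q (linfam n Ts v) = linfam n (\<lambda>k. conj3 P Q (Ts k)) v"
  by (simp add: conj3_def linfam_def mult_sum_left mult_sum_right mult_smat_left mult_smat_right)

lemma sc_linfam: "sc_triple t (linfam n Ts v) = linfam n Ts (\<lambda>k. t * v k)"
  by (simp add: sc_triple_def linfam_def smat_sum smat_smat)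

lemma linfam_scaled:
  assumes "\<And>k. k < n \<Longrightarrow> k \<notin> Z \<Longrightarrow> Ts' k = sc_triple (s k) (Ts k)" "\<forall>k\<in>Z. v k = 0"
  shows "linfam n Ts' v = linfam n Ts (\<lambda>k. s k * v k)"
proof -
  have "smat (v k) (sel (Ts' k)) = smat (s k * v k) (sel (Ts k))"
    if "k < n" "sel = fst \<or> sel = (\<lambda>T. fst (snd T)) \<or> sel = (\<lambda>T. snd (snd T))" for k sel
  proof (cases "k \<in> Z")
    case True then show ?thesis using assms by simp
  next
    case False then show ?thesis using assms(1)[OF \<open>k<n\<close> False] that
      by (auto simp: sc_triple_def smat_smat mult.commute)
  qed
  then show ?thesis unfolding linfam_def
    by (auto intro!: sum.cong)
qed

lemma sum_list_nth: "sum_list (a::nat list) = (\<Sum>i<length a. a!i)"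
  by (simp add: sum_list_sum_nth atLeast0LessThan)

lemma homog_kill:
  fixes g :: "'a::field_char_0 triple \<Rightarrow> 'a"
  assumes hi: "hom_invariant e g" and N: "\<And>v. linfam n Ts v \<in> nil_triples"
    and wf: "wfl n L" and rep: "\<And>v. g (linfam n Ts v) = evalp L v"
    and la: "length a = n" and ne: "sum_list a \<noteq> e"
  shows "coeffp L a = 0"
proof -
  have "coeffp L a * mnm (\<lambda>_. 2) a = 2^e * coeffp L a"
  proof (rule kill[OF wf _ la, where Z="{}"])
    fix v
    have "evalp L (\<lambda>i. 2 * v i) = g (sc_triple 2 (linfam n Ts v))"
      by (simp add: rep sc_linfam)
    also have "\<dots> = 2^e * g (linfam n Ts v)"
    proof -
      have "g (scale_triple 2 (linfam n Ts v)) = 2^e * g (linfam n Ts v)"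
        using hi N unfolding hom_invariant_def by blast
      then show ?thesis by (simp add: scale_triple_eq)
    qed
    finally show "evalp L (\<lambda>i. 2 * v i) = 2^e * evalp L v" by (simp add: rep)
  qed auto
  moreover have "mnm (\<lambda>_. 2::'a) a = 2 ^ sum_list a"
    by (simp add: mnm_def power_sum sum_list_nth)
  ultimately have "coeffp L a * (2 ^ sum_list a - 2 ^ e) = 0"
    by (simp add: algebra_simps)
  moreover have "(2::'a) ^ sum_list a \<noteq> 2 ^ e"
  proof
    assume "(2::'a) ^ sum_list a = 2 ^ e"
    then have "of_nat (2 ^ sum_list a) = (of_nat (2 ^ e) :: 'a)" by simp
    then have "(2::nat) ^ sum_list a = 2 ^ e" by (simp only: of_nat_eq_iff)
    then show False using ne by simp
  qed
  ultimately show ?thesis by simp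
qed

lemma conj_kill:
  fixes g :: "'a::field_char_0 triple \<Rightarrow> 'a"
  assumes hi: "hom_invariant e g" and N: "\<And>v. linfam n Ts v \<in> nil_triples"
    and wf: "wfl n L" and rep: "\<And>v. g (linfam n Ts v) = evalp L v"
    and PQ: "P ** Q = mat 1" "Q ** P = mat 1"
    and sc: "\<And>k. k < n \<Longrightarrow> k \<notin> Z \<Longrightarrow> conj3 P Q (Ts k) = sc_triple (s k) (Ts k)"
    and la: "length a = n" and az: "\<forall>i\<in>Z. i < n \<longrightarrow> a!i = 0"
  shows "coeffp L a * mnm s a = coeffp L a"
proof -
  have "coeffp L a * mnm s a = 1 * coeffp L a"
  proof (rule kill[OF wf _ la az])
    fix v :: "nat \<Rightarrow> 'a" assume vz: "\<forall>i\<in>Z. v i = 0"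
    have "evalp L (\<lambda>i. s i * v i) = g (linfam n Ts (\<lambda>i. s i * v i))" by (simp add: rep)
    also have "linfam n Ts (\<lambda>i. s i * v i) = linfam n (\<lambda>k. conj3 P Q (Ts k)) v"
      by (rule linfam_scaled[symmetric]) (use sc vz in auto)
    also have "\<dots> = conj_triple P (linfam n Ts v)"
      by (simp add: conj3_linfam conj_triple_eq[OF PQ])
    also have "g \<dots> = g (linfam n Ts v)"
      using hi N invertible_of[OF PQ] unfolding hom_invariant_def by blast
    finally show "evalp L (\<lambda>i. s i * v i) = 1 * evalp L v" by (simp add: rep)
  qed
  then show ?thesis by simp
qed

lemma main_generic:
  fixes f :: "'a::field_char_0 triple \<Rightarrow> 'a"
  assumes N: "\<And>v. linfam n Ts v \<in> nil_triples"
    and fval: "\<And>v. f (linfam n Ts v) = c0 * mnm v mstar" and c0: "c0 \<noteq> 0"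
    and W: "W \<subseteq> {a. length a = n}" "replicate n 0 \<notin> W" "mstar \<in> W"
    and clos: "\<And>a b. a \<in> W \<Longrightarrow> b \<in> below n a \<Longrightarrow> b \<noteq> replicate n 0 \<Longrightarrow> b \<noteq> a \<Longrightarrow> b \<in> W \<or> map2 (-) a b \<in> W"
    and kills: "\<And>g e L a. e < d \<Longrightarrow> hom_invariant e g \<Longrightarrow> wfl n L \<Longrightarrow> (\<forall>v. g (linfam n Ts v) = evalp L v)
                  \<Longrightarrow> a \<in> W \<Longrightarrow> coeffp L a = 0"
  shows "\<not> decomposable d f"
proof
  assume "decomposable d f"
  then obtain h where h: "h \<in> gen_alg {g. \<exists>e<d. hom_invariant e g}" and fh: "\<forall>T\<in>nil_triples. f T = h T"
    unfolding decomposable_def by blast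
  have "\<exists>L. wfl n L \<and> (\<forall>v. h (linfam n Ts v) = evalp L v) \<and> (\<forall>a\<in>W. coeffp L a = 0)"
  proof (rule gen_good[OF W(1,2) clos _ h])
    fix g :: "'a triple \<Rightarrow> 'a" assume "g \<in> {g. \<exists>e<d. hom_invariant e g}"
    then obtain e where e: "e < d" "hom_invariant e g" by blast
    then have "g \<in> poly_funs" by (simp add: hom_invariant_def)
    then obtain L where L: "wfl n L" "\<forall>v. g (linfam n Ts v) = evalp L v"
      using poly_rep by blast
    show "\<exists>L. wfl n L \<and> (\<forall>v. g (linfam n Ts v) = evalp L v) \<and> (\<forall>a\<in>W. coeffp L a = 0)"
      using L kills[OF e L] by blast
  qed auto
  then obtain L where L: "wfl n L" "\<forall>v. h (linfam n Ts v) = evalp L v" "\<forall>a\<in>W. coeffp L a = 0"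
    by blast
  have lm: "length mstar = n" using W by auto
  have "coeffp L mstar = coeffp [(c0, mstar)] mstar"
  proof (rule evalp_eq_coeffp[of n])
    show "\<forall>u. evalp L u = evalp [(c0, mstar)] u"
      using L(2) fh N fval by (simp add: mult.commute)
  qed (use L lm in auto)
  then show False using L(3) W(3) c0 by simp
qed




lemma push_alt: "push n' \<pi> m = map (\<lambda>j. \<Sum>i<length m. if \<pi> i = j then m!i else 0) [0..<n']"
  unfolding push_def
proof (rule map_cong[OF refl])
  fix j
  have "{i. i < length m \<and> \<pi> i = j} = {i \<in> {..<length m}. \<pi> i = j}" by auto
  then show "(\<Sum>i\<in>{i. i < length m \<and> \<pi> i = j}. m!i) = (\<Sum>i<length m. if \<pi> i = j then m!i else 0)"
    by (simp only: sum.inter_filter[OF finite_lessThan])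
qed

lemma length4: "length m = 4 \<Longrightarrow> \<exists>a b c d. m = [a,b,c,d]"
  by (cases m; cases "tl m"; cases "tl (tl m)"; cases "tl (tl (tl m))") auto

lemma sum4: "(\<Sum>i<(4::nat). f i) = f 0 + f 1 + f 2 + (f 3 :: 'a::comm_monoid_add)"
  by (simp add: eval_nat_numeral lessThan_Suc add_ac)

lemma sum3: "(\<Sum>i<(3::nat). f i) = f 0 + f 1 + (f 2 :: 'a::comm_monoid_add)"
  by (simp add: eval_nat_numeral lessThan_Suc add_ac)

lemma upt3: "[0..<3] = [0,1,2::nat]" by (simp add: eval_nat_numeral upt_rec)
lemma upt4: "[0..<4] = [0,1,2,3::nat]" by (simp add: eval_nat_numeral upt_rec)

lemma mnm4: "mnm u [a,b,c,d] = u 0 ^ a * u 1 ^ b * u 2 ^ c * u 3 ^ d"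
  by (simp add: mnm_def sum4 prod.lessThan_Suc eval_nat_numeral mult_ac)

lemma push4: "push n' \<pi> [a,b,c,d] = map (\<lambda>j. (if \<pi> 0 = j then a else 0) + (if \<pi> 1 = j then b else 0) + (if \<pi> 2 = j then c else 0) + (if \<pi> 3 = j then d else 0)) [0..<n']"
  by (simp add: push_alt sum4 eval_nat_numeral)

lemma pair_kill:
  fixes g :: "'a::field_char_0 triple \<Rightarrow> 'a" and TsK Ts3 :: "nat \<Rightarrow> 'a triple"
  assumes hi: "hom_invariant e g"
    and NK: "\<And>u. linfam 4 TsK u \<in> nil_triples"
    and ij: "i < 3" "j < 3" "i \<noteq> j"
    and \<pi>: "\<pi> 0 = i" "\<pi> 1 = i" "\<pi> 2 = j" "\<pi> 3 = j"
    and rel: "\<And>v. linfam 3 Ts3 v = linfam 4 TsK (\<lambda>k. v (\<pi> k))"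
    and D: "D ** Di = mat 1" "Di ** D = mat 1" "\<And>k. k < 4 \<Longrightarrow> conj3 D Di (TsK k) = sc_triple (s k) (TsK k)"
      "s 0 * s 3 \<noteq> 1" "s 1 * s 2 \<noteq> 1"
    and P: "P ** Pinv = mat 1" "Pinv ** P = mat 1" "conj3 P Pinv (TsK 0) = sc_triple \<sigma>a (TsK 1)"
      "conj3 P Pinv (TsK 2) = sc_triple \<sigma>b (TsK 3)" "\<sigma>a * \<sigma>b = -1"
    and wf: "wfl 3 L" and rep: "\<And>v. g (linfam 3 Ts3 v) = evalp L v"
  shows "coeffp L (map (\<lambda>l. if l = i \<or> l = j then 1 else 0) [0..<3]) = 0"
proof -
  let ?b = "map (\<lambda>l. if l = i \<or> l = j then 1 else 0) [0..<3]"
  have "g \<in> poly_funs" using hi by (simp add: hom_invariant_def)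
  then obtain LK where LK: "wfl 4 LK" "\<And>u. g (linfam 4 TsK u) = evalp LK u"
    using poly_rep by blast
  define S where "S = {[1,0,1,0],[1,0,0,1],[0,1,1,0],[0,1,0,1::nat]}"
  have pushb: "push 3 \<pi> [a,b,c,d] = ?b \<longleftrightarrow> a + b = 1 \<and> c + d = 1" for a b c d
  proof -
    have "push 3 \<pi> [a,b,c,d] = map (\<lambda>l. (if i = l then a + b else 0) + (if j = l then c + d else 0)) [0..<3]"
      unfolding push4 using \<pi> by (intro map_cong) auto
    also have "\<dots> = ?b \<longleftrightarrow> a + b = 1 \<and> c + d = 1"
    proof
      assume h: "map (\<lambda>l. (if i = l then a + b else 0) + (if j = l then c + d else 0)) [0..<3] = ?b"
      have "a + b = 1" using arg_cong[OF h, of "\<lambda>xs. xs ! i"] ij by simp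
      moreover have "c + d = 1" using arg_cong[OF h, of "\<lambda>xs. xs ! j"] ij by simp
      ultimately show "a + b = 1 \<and> c + d = 1" by simp
    next
      assume "a + b = 1 \<and> c + d = 1"
      then show "map (\<lambda>l. (if i = l then a + b else 0) + (if j = l then c + d else 0)) [0..<3] = ?b"
        using ij by (auto intro!: map_cong)
    qed
    finally show ?thesis .
  qed
  have step1: "coeffp L ?b = coeffp (substp 3 \<pi> (\<lambda>_. 1) LK) ?b"
  proof (rule evalp_eq_coeffp[of 3])
    show "\<forall>u. evalp L u = evalp (substp 3 \<pi> (\<lambda>_. 1) LK) u"
    proof
      fix u
      have "evalp (substp 3 \<pi> (\<lambda>_. 1) LK) u = evalp LK (\<lambda>k. 1 * u (\<pi> k))"
        by (rule evalp_substp) (use LK \<pi> ij in \<open>auto simp: less_Suc_eq eval_nat_numeral\<close>)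
      also have "\<dots> = g (linfam 3 Ts3 u)" by (simp add: LK rel)
      finally show "evalp L u = evalp (substp 3 \<pi> (\<lambda>_. 1) LK) u" by (simp add: rep)
    qed
  qed (use wf in \<open>auto simp: wfl_substp\<close>)
  have step2: "coeffp (substp 3 \<pi> (\<lambda>_. 1) LK) ?b = (\<Sum>m\<in>S. coeffp LK m * mnm (\<lambda>_. 1) m)"
  proof (rule coeffp_substp_group[OF _ LK(1)])
    show "finite S" by (simp add: S_def)
  next
    fix m :: "nat list" assume "length m = 4" "push 3 \<pi> m = ?b"
    then obtain a b c d where m: "m = [a,b,c,d]" using length4 by blast
    then have "a + b = 1" "c + d = 1" using pushb \<open>push 3 \<pi> m = ?b\<close> by auto
    then show "m \<in> S" unfolding S_def m by (auto simp: add_is_1)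
  next
    fix m assume "m \<in> S" then show "push 3 \<pi> m = ?b"
      unfolding S_def using pushb by auto
  qed
  have tor: "coeffp LK m * mnm s m = coeffp LK m" if "length m = 4" for m
    by (rule conj_kill[OF hi NK LK(1) LK(2) D(1,2), where Z="{}"]) (use D that in auto)
  have k1: "coeffp LK [1,0,0,1] = 0"
  proof -
    have "coeffp LK [1,0,0,1] * (s 0 * s 3) = coeffp LK [1,0,0,1]"
      using tor[of "[1,0,0,1]"] by (simp add: mnm4)
    then have "coeffp LK [1,0,0,1] * (s 0 * s 3 - 1) = 0" by (simp add: algebra_simps)
    then show ?thesis using D(4) by simp
  qed
  have k2: "coeffp LK [0,1,1,0] = 0"
  proof -
    have "coeffp LK [0,1,1,0] * (s 1 * s 2) = coeffp LK [0,1,1,0]"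
      using tor[of "[0,1,1,0]"] by (simp add: mnm4)
    then have "coeffp LK [0,1,1,0] * (s 1 * s 2 - 1) = 0" by (simp add: algebra_simps)
    then show ?thesis using D(5) by simp
  qed
  define cz where "cz (k::nat) = (if k = 0 \<or> k = 2 then 1 else (0::'a))" for k
  define cs where "cs (k::nat) = (if k = 1 then \<sigma>a else if k = 3 then \<sigma>b else 0)" for k
  define \<pi>' where "\<pi>' (k::nat) = (if k < 2 then 0 else (2::nat))" for k
  have cyc_eval: "evalp LK (\<lambda>k. cz k * u k) = evalp LK (\<lambda>k. cs k * u (\<pi>' k))" for u
  proof -
    have "evalp LK (\<lambda>k. cz k * u k) = g (linfam 4 TsK (\<lambda>k. cz k * u k))" by (simp add: LK)
    also have "\<dots> = g (conj_triple P (linfam 4 TsK (\<lambda>k. cz k * u k)))"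
      using hi NK invertible_of[OF P(1,2)] unfolding hom_invariant_def by metis
    also have "conj_triple P (linfam 4 TsK (\<lambda>k. cz k * u k)) = linfam 4 (\<lambda>k. conj3 P Pinv (TsK k)) (\<lambda>k. cz k * u k)"
      by (simp add: conj_triple_eq[OF P(1,2)] conj3_linfam)
    also have "\<dots> = linfam 4 TsK (\<lambda>k. cs k * u (\<pi>' k))"
      using P(3,4) unfolding linfam_def sum4 cz_def cs_def \<pi>'_def sc_triple_def
      by (simp add: smat_smat mult.commute prod_eq_iff)
    finally show ?thesis by (simp add: LK)
  qed
  have "coeffp (substp 4 (\<lambda>i. i) cz LK) [1,0,1,0] = coeffp (substp 4 \<pi>' cs LK) [1,0,1,0]"
  proof (rule evalp_eq_coeffp[of 4])
    show "\<forall>u. evalp (substp 4 (\<lambda>i. i) cz LK) u = evalp (substp 4 \<pi>' cs LK) u"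
    proof
      fix u
      have "evalp (substp 4 \<pi>' cs LK) u = evalp LK (\<lambda>k. cs k * u (\<pi>' k))"
        by (rule evalp_substp) (use LK in \<open>auto simp: \<pi>'_def\<close>)
      then show "evalp (substp 4 (\<lambda>i. i) cz LK) u = evalp (substp 4 \<pi>' cs LK) u"
        using LK by (simp add: evalp_substp_id cyc_eval)
    qed
  qed (auto simp: wfl_substp)
  moreover have "coeffp (substp 4 (\<lambda>i. i) cz LK) [1,0,1,0] = coeffp LK [1,0,1,0]"
    using LK by (simp add: coeffp_substp_id mnm4 cz_def)
  moreover have "coeffp (substp 4 \<pi>' cs LK) [1,0,1,0] = (\<Sum>m\<in>{[0,1,0,1]}. coeffp LK m * mnm cs m)"
  proof (rule coeffp_substp_group[OF _ LK(1)])
    fix m :: "nat list" assume "length m = 4" "push 4 \<pi>' m = [1,0,1,0]" "mnm cs m \<noteq> 0"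
    then obtain a b c d where m: "m = [a,b,c,d]" using length4 by blast
    have "a = 0" "c = 0" using \<open>mnm cs m \<noteq> 0\<close> by (auto simp: m mnm4 cs_def zero_power)
    moreover have "a + b = 1" "c + d = 1"
      using \<open>push 4 \<pi>' m = [1,0,1,0]\<close> by (auto simp: m push4 \<pi>'_def upt4)
    ultimately show "m \<in> {[0,1,0,1]}" by (simp add: m)
  qed (auto simp: push4 \<pi>'_def upt4)
  ultimately have k3: "coeffp LK [1,0,1,0] = - coeffp LK [0,1,0,1]"
    using P(5) by (simp add: mnm4 cs_def)
  have "coeffp L ?b = (\<Sum>m\<in>S. coeffp LK m)" using step1 step2 by (simp add: mnm_def)
  also have "\<dots> = coeffp LK [1,0,1,0] + coeffp LK [1,0,0,1] + coeffp LK [0,1,1,0] + coeffp LK [0,1,0,1]"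
    by (simp add: S_def)
  also have "\<dots> = 0" using k1 k2 k3 by simp
  finally show ?thesis .
qed




definition slot0 :: "'a::field mat3 \<Rightarrow> 'a triple" where "slot0 M = (M, 0, 0)"
definition slot1 :: "'a::field mat3 \<Rightarrow> 'a triple" where "slot1 M = (0, M, 0)"
definition slot2 :: "'a::field mat3 \<Rightarrow> 'a triple" where "slot2 M = (0, 0, M)"

lemma conj3_slot:
  "conj3 P Q (slot0 M) = slot0 (P ** M ** Q)" "conj3 P Q (slot1 M) = slot1 (P ** M ** Q)"
  "conj3 P Q (slot2 M) = slot2 (P ** M ** Q)" "conj3 P Q (0,0,0) = (0,0,0)"
  by (simp_all add: conj3_def slot0_def slot1_def slot2_def)

lemma sc_slot:
  "sc_triple c (slot0 M) = slot0 (smat c M)" "sc_triple c (slot1 M) = slot1 (smat c M)"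
  "sc_triple c (slot2 M) = slot2 (smat c M)"
  by (simp_all add: sc_triple_def slot0_def slot1_def slot2_def)

lemma nilp3: "A ** (A ** A) = 0 \<Longrightarrow> mat_nilpotent A"
  unfolding mat_nilpotent_def by (rule exI[of _ 3]) (simp add: eval_nat_numeral)

lemma nilp_smat: "A ** (A ** A) = 0 \<Longrightarrow> mat_nilpotent (smat c (A::'a::field mat3))"
  by (rule nilp3) (simp add: mult_smat_left mult_smat_right smat_smat)

definition Um :: "'a::field mat3" where "Um = mk3 0 1 0 0 0 1 0 0 0"
definition Lm :: "'a::field mat3" where "Lm = mk3 0 0 0 (-1) 0 0 0 1 0"
definition E12 :: "'a::field mat3" where "E12 = mk3 0 1 0 0 0 0 0 0 0"
definition E23 :: "'a::field mat3" where "E23 = mk3 0 0 0 0 0 1 0 0 0"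
definition nE21 :: "'a::field mat3" where "nE21 = mk3 0 0 0 (-1) 0 0 0 0 0"
definition E32 :: "'a::field mat3" where "E32 = mk3 0 0 0 0 0 0 0 1 0"

lemmas mats = Um_def Lm_def E12_def E23_def nE21_def E32_def

lemma one_mk3': "(mat 1::'a::field mat3) = mk3 1 0 0 0 1 0 0 0 1" by (rule one_mk3)

lemmas csimps = mk3_simps zero_mk3 one_mk3 mats slot0_def slot1_def slot2_def sc_triple_def conj3_def

definition Dt :: "'a::field mat3" where "Dt = mk3 2 0 0 0 1 0 0 0 1"
definition Dti :: "'a::field mat3" where "Dti = mk3 (1/2) 0 0 0 1 0 0 0 1"
definition Pc :: "'a::field mat3" where "Pc = mk3 0 0 1 1 0 0 0 1 0"
definition Pci :: "'a::field mat3" where "Pci = mk3 0 1 0 0 0 1 1 0 0"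

lemma Dt_inv: "Dt ** Dti = (mat 1 :: 'a::field_char_0 mat3)" "Dti ** Dt = (mat 1 :: 'a::field_char_0 mat3)"
  by (simp_all add: Dt_def Dti_def mk3_simps one_mk3)
lemma Pc_inv: "Pc ** Pci = (mat 1 :: 'a::field_char_0 mat3)" "Pci ** Pc = (mat 1 :: 'a::field_char_0 mat3)"
  by (simp_all add: Pc_def Pci_def mk3_simps one_mk3)

lemma lin3: "linfam 3 (\<lambda>k. [T0, T1, T2] ! k) v =
  (smat (v 0) (fst T0) + smat (v 1) (fst T1) + smat (v 2) (fst T2),
   smat (v 0) (fst (snd T0)) + smat (v 1) (fst (snd T1)) + smat (v 2) (fst (snd T2)),
   smat (v 0) (snd (snd T0)) + smat (v 1) (snd (snd T1)) + smat (v 2) (snd (snd T2)))"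
  by (simp add: linfam_def sum3)

lemma lin4: "linfam 4 (\<lambda>k. [T0, T1, T2, T3] ! k) v =
  (smat (v 0) (fst T0) + smat (v 1) (fst T1) + smat (v 2) (fst T2) + smat (v 3) (fst T3),
   smat (v 0) (fst (snd T0)) + smat (v 1) (fst (snd T1)) + smat (v 2) (fst (snd T2)) + smat (v 3) (fst (snd T3)),
   smat (v 0) (snd (snd T0)) + smat (v 1) (snd (snd T1)) + smat (v 2) (snd (snd T2)) + smat (v 3) (snd (snd T3)))"
  by (simp add: linfam_def sum4)

lemma pairUL01:
  fixes g :: "'a::field_char_0 triple \<Rightarrow> 'a"
  assumes hi: "hom_invariant e g" and wf: "wfl 3 L"
    and rep: "\<And>v. g (linfam 3 (\<lambda>k. [slot0 Um, slot1 Lm, (0,0,0)] ! k) v) = evalp L v"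
  shows "coeffp L [1,1,0] = 0"
proof -
  let ?TsK = "\<lambda>k. [slot0 E12, slot0 E23, slot1 nE21, slot1 (E32::'a mat3)] ! k"
  let ?s = "\<lambda>k. [2, 1, 1/2, 1::'a] ! k"
  have "coeffp L (map (\<lambda>l. if l = 0 \<or> l = 1 then 1 else 0) [0..<3]) = 0"
  proof (rule pair_kill[OF hi, where TsK = ?TsK and \<pi> = "\<lambda>k. if k < 2 then 0 else 1"
        and D = Dt and Di = Dti and s = ?s and P = Pc and Pinv = Pci and \<sigma>a = 1 and \<sigma>b = "-1"])
    show "linfam 4 ?TsK u \<in> nil_triples" for u
      unfolding nil_triples_def lin4
      by (auto intro!: nilp3 simp: csimps)
    show "linfam 3 (\<lambda>k. [slot0 Um, slot1 Lm, (0,0,0)] ! k) v = linfam 4 ?TsK (\<lambda>k. v (if k < 2 then 0 else 1))" for v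
      unfolding lin3 lin4 by (simp add: csimps)
    show "conj3 Dt Dti (?TsK k) = sc_triple (?s k) (?TsK k)" if "k < 4" for k
      using that by (auto simp: less_Suc_eq eval_nat_numeral csimps Dt_def Dti_def)
    show "conj3 Pc Pci (?TsK 0) = sc_triple 1 (?TsK 1)"
      by (simp add: csimps Pc_def Pci_def)
    show "conj3 Pc Pci (?TsK 2) = sc_triple (-1) (?TsK 3)"
      by (simp add: csimps Pc_def Pci_def)
  qed (use wf rep Dt_inv Pc_inv in auto)
  then show ?thesis by (simp add: upt3)
qed




lemma sc_triple_one: "sc_triple 1 T = T"
  by (cases T) (simp add: sc_triple_def smat_def)

lemma transfer_conj:
  fixes g :: "'a::field_char_0 triple \<Rightarrow> 'a"
  assumes hi: "hom_invariant e g" and N2: "\<And>v. linfam n Ts2 v \<in> nil_triples"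
    and PQ: "P ** Q = mat 1" "Q ** P = mat 1"
    and hyp: "\<And>k. k < n \<Longrightarrow> k \<notin> Z \<Longrightarrow> conj3 P Q (Ts2 k) = Ts1 k"
    and wf1: "wfl n L1" and rep1: "\<And>v. g (linfam n Ts1 v) = evalp L1 v"
    and wf2: "wfl n L2" and rep2: "\<And>v. g (linfam n Ts2 v) = evalp L2 v"
    and la: "length a = n" and az: "\<forall>i\<in>Z. i < n \<longrightarrow> a!i = 0"
  shows "coeffp L1 a = coeffp L2 a"
proof -
  define zr where "zr i = (if i \<in> Z then 0 else (1::'a))" for i
  have mz: "mnm zr a = 1"
    unfolding mnm_def by (rule prod.neutral) (use az la in \<open>auto simp: zr_def\<close>)
  have "evalp (substp n (\<lambda>i. i) zr L1) v = evalp (substp n (\<lambda>i. i) zr L2) v" for v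
  proof -
    let ?w = "\<lambda>i. zr i * v i"
    have wz: "\<forall>k\<in>Z. ?w k = 0" by (simp add: zr_def)
    have "linfam n Ts1 ?w = linfam n (\<lambda>k. conj3 P Q (Ts2 k)) (\<lambda>k. 1 * ?w k)"
      by (rule linfam_scaled) (use hyp wz in \<open>auto simp: sc_triple_one\<close>)
    also have "\<dots> = conj_triple P (linfam n Ts2 ?w)"
      by (simp add: conj3_linfam conj_triple_eq[OF PQ])
    finally have "g (linfam n Ts1 ?w) = g (linfam n Ts2 ?w)"
      using hi N2 invertible_of[OF PQ] unfolding hom_invariant_def by metis
    then show ?thesis using wf1 wf2 by (simp add: evalp_substp_id rep1 rep2)
  qed
  then have "coeffp (substp n (\<lambda>i. i) zr L1) a = coeffp (substp n (\<lambda>i. i) zr L2) a"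
    by (intro evalp_eq_coeffp[of n]) (auto simp: wfl_substp)
  then show ?thesis using wf1 wf2 la by (simp add: coeffp_substp_id mz)
qed

lemma two_pow_inj: "(2::'a::field_char_0) ^ x = 2 ^ y \<Longrightarrow> x = y"
proof -
  assume "(2::'a) ^ x = 2 ^ y"
  then have "of_nat (2 ^ x) = (of_nat (2 ^ y) :: 'a)" by simp
  then have "(2::nat) ^ x = 2 ^ y" by (simp only: of_nat_eq_iff)
  then show "x = y" by simp
qed

lemma mnm3: "mnm u [x,y,z] = u 0 ^ x * u 1 ^ y * u 2 ^ z"
  by (simp add: mnm_def eval_nat_numeral prod.lessThan_Suc mult_ac)

lemma coeff_kill_factor: "(c::'a::field) * k = c \<Longrightarrow> k \<noteq> 1 \<Longrightarrow> c = 0"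
proof -
  assume "c * k = c" "k \<noteq> 1"
  then have "c * (k - 1) = 0" by (simp add: algebra_simps)
  then show "c = 0" using \<open>k \<noteq> 1\<close> by simp
qed

definition PU :: "'a::field mat3" where "PU = mk3 1 0 0 0 (1/2) 0 0 0 (1/4)"
definition PL :: "'a::field mat3" where "PL = mk3 1 0 0 0 2 0 0 0 4"

lemma PU_inv: "PU ** PL = (mat 1 :: 'a::field_char_0 mat3)" "PL ** PU = (mat 1 :: 'a::field_char_0 mat3)"
  by (simp_all add: PU_def PL_def mk3_simps one_mk3)

lemma PU_Um: "PU ** Um ** PL = smat 2 (Um :: 'a::field_char_0 mat3)"
  by (simp add: PU_def PL_def csimps)
lemma PL_Lm: "PL ** Lm ** PU = smat 2 (Lm :: 'a::field_char_0 mat3)"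
  by (simp add: PU_def PL_def csimps)
lemma PL_Um: "PL ** Um ** PU = smat (1/2) (Um :: 'a::field_char_0 mat3)"
  by (simp add: PU_def PL_def csimps)

lemma pairUL02:
  fixes g :: "'a::field_char_0 triple \<Rightarrow> 'a"
  assumes hi: "hom_invariant e g" and wf: "wfl 3 L"
    and rep: "\<And>v. g (linfam 3 (\<lambda>k. [slot0 Um, (0,0,0), slot2 Lm] ! k) v) = evalp L v"
  shows "coeffp L [1,0,1] = 0"
proof -
  let ?TsK = "\<lambda>k. [slot0 E12, slot0 E23, slot2 nE21, slot2 (E32::'a mat3)] ! k"
  let ?s = "\<lambda>k. [2, 1, 1/2, 1::'a] ! k"
  have "coeffp L (map (\<lambda>l. if l = 0 \<or> l = 2 then 1 else 0) [0..<3]) = 0"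
  proof (rule pair_kill[OF hi, where TsK = ?TsK and \<pi> = "\<lambda>k. if k < 2 then 0 else 2"
        and D = Dt and Di = Dti and s = ?s and P = Pc and Pinv = Pci and \<sigma>a = 1 and \<sigma>b = "-1"])
    show "linfam 4 ?TsK u \<in> nil_triples" for u
      unfolding nil_triples_def lin4
      by (auto intro!: nilp3 simp: csimps)
    show "linfam 3 (\<lambda>k. [slot0 Um, (0,0,0), slot2 Lm] ! k) v = linfam 4 ?TsK (\<lambda>k. v (if k < 2 then 0 else 2))" for v
      unfolding lin3 lin4 by (simp add: csimps)
    show "conj3 Dt Dti (?TsK k) = sc_triple (?s k) (?TsK k)" if "k < 4" for k
      using that by (auto simp: less_Suc_eq eval_nat_numeral csimps Dt_def Dti_def)
    show "conj3 Pc Pci (?TsK 0) = sc_triple 1 (?TsK 1)"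
      by (simp add: csimps Pc_def Pci_def)
    show "conj3 Pc Pci (?TsK 2) = sc_triple (-1) (?TsK 3)"
      by (simp add: csimps Pc_def Pci_def)
  qed (use wf rep Dt_inv Pc_inv in auto)
  then show ?thesis by (simp add: upt3)
qed

lemma pairLU12:
  fixes g :: "'a::field_char_0 triple \<Rightarrow> 'a"
  assumes hi: "hom_invariant e g" and wf: "wfl 3 L"
    and rep: "\<And>v. g (linfam 3 (\<lambda>k. [(0,0,0), slot1 Lm, slot2 Um] ! k) v) = evalp L v"
  shows "coeffp L [0,1,1] = 0"
proof -
  let ?TsK = "\<lambda>k. [slot1 nE21, slot1 E32, slot2 E12, slot2 (E23::'a mat3)] ! k"
  let ?s = "\<lambda>k. [1/2, 1, 2, 1::'a] ! k"
  have "coeffp L (map (\<lambda>l. if l = 1 \<or> l = 2 then 1 else 0) [0..<3]) = 0"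
  proof (rule pair_kill[OF hi, where TsK = ?TsK and \<pi> = "\<lambda>k. if k < 2 then 1 else 2"
        and D = Dt and Di = Dti and s = ?s and P = Pc and Pinv = Pci and \<sigma>a = "-1" and \<sigma>b = 1])
    show "linfam 4 ?TsK u \<in> nil_triples" for u
      unfolding nil_triples_def lin4
      by (auto intro!: nilp3 simp: csimps)
    show "linfam 3 (\<lambda>k. [(0,0,0), slot1 Lm, slot2 Um] ! k) v = linfam 4 ?TsK (\<lambda>k. v (if k < 2 then 1 else 2))" for v
      unfolding lin3 lin4 by (simp add: csimps)
    show "conj3 Dt Dti (?TsK k) = sc_triple (?s k) (?TsK k)" if "k < 4" for k
      using that by (auto simp: less_Suc_eq eval_nat_numeral csimps Dt_def Dti_def)
    show "conj3 Pc Pci (?TsK 0) = sc_triple (-1) (?TsK 1)"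
      by (simp add: csimps Pc_def Pci_def)
    show "conj3 Pc Pci (?TsK 2) = sc_triple 1 (?TsK 3)"
      by (simp add: csimps Pc_def Pci_def)
  qed (use wf rep Dt_inv Pc_inv in auto)
  then show ?thesis by (simp add: upt3)
qed

definition pmat :: "('a::field triple \<Rightarrow> 'a mat3) \<Rightarrow> bool" where
  "pmat M \<longleftrightarrow> (\<forall>i j. (\<lambda>T. M T $ i $ j) \<in> poly_funs)"

lemma gen_alg_sum3: "f1 \<in> gen_alg G \<Longrightarrow> f2 \<in> gen_alg G \<Longrightarrow> f3 \<in> gen_alg G \<Longrightarrow> (\<lambda>x. f1 x + f2 x + f3 x) \<in> gen_alg G"
  by (intro gen_alg.add)

lemma pmat_fst: "pmat (\<lambda>T. fst T)" "pmat (\<lambda>T. fst (snd T))" "pmat (\<lambda>T. snd (snd T))"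
  unfolding pmat_def poly_funs_def coord_funs_def by (auto intro!: gen_alg.gen)

lemma pmat_mult: "pmat M \<Longrightarrow> pmat N \<Longrightarrow> pmat (\<lambda>T. M T ** N T)"
  unfolding pmat_def poly_funs_def
  by (auto simp: matrix_matrix_mult_def sum_3 intro!: gen_alg.add gen_alg.mult)

lemma trace_poly: "pmat M \<Longrightarrow> (\<lambda>T. trace (M T)) \<in> poly_funs"
  unfolding pmat_def poly_funs_def
  by (auto simp: trace_def sum_3 intro!: gen_alg.add)

lemma poly_scal: "f \<in> poly_funs \<Longrightarrow> (\<lambda>T. c * f T) \<in> poly_funs"
  unfolding poly_funs_def by (auto intro!: gen_alg.mult gen_alg.const)

lemma poly_add: "f \<in> poly_funs \<Longrightarrow> g \<in> poly_funs \<Longrightarrow> (\<lambda>T. f T + g T) \<in> poly_funs"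
  unfolding poly_funs_def by (auto intro!: gen_alg.add)

lemma conj_mul:
  fixes P Q :: "'a::field mat3"
  assumes "Q ** P = mat 1"
  shows "((P ** A) ** Q) ** ((P ** B) ** Q) = (P ** (A ** B)) ** Q"
proof -
  have "((P ** A) ** Q) ** ((P ** B) ** Q) = P ** A ** (Q ** P) ** B ** Q"
    by (simp add: matrix_mul_assoc)
  also have "\<dots> = (P ** (A ** B)) ** Q" using assms by (simp add: matrix_mul_assoc)
  finally show ?thesis .
qed

lemma conj_trace:
  fixes P Q :: "'a::field mat3"
  assumes "Q ** P = mat 1"
  shows "trace ((P ** X) ** Q) = trace X"
proof -
  have "trace ((P ** X) ** Q) = trace (Q ** (P ** X))" by (rule trace_mul_sym)
  also have "\<dots> = trace X" using assms by (simp add: matrix_mul_assoc)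
  finally show ?thesis .
qed

lemma conj_triple_inv:
  fixes P :: "'a::field mat3"
  assumes "invertible P"
  shows "\<exists>Q. Q ** P = mat 1 \<and> conj_triple P T = ((P ** fst T) ** Q, (P ** fst (snd T)) ** Q, (P ** snd (snd T)) ** Q)"
proof -
  obtain Q where "P ** Q = mat 1" "Q ** P = mat 1" using assms unfolding invertible_def by blast
  then show ?thesis using conj_triple_eq[of P Q T] by (auto simp: conj3_def)
qed

lemma smat_mult: "smat a (A::'a::field mat3) ** smat b B = smat (a*b) (A ** B)"
  by (simp add: mult_smat_left mult_smat_right smat_smat mult.commute)

lemma trace_smat: "trace (smat c (A::'a::field mat3)) = c * trace A"
  by (simp add: trace_def smat_def sum_distrib_left)




lemma length3: "length m = 3 \<Longrightarrow> \<exists>a b c. m = [a,b,c]"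
  by (cases m; cases "tl m"; cases "tl (tl m)") auto

lemma below3: "b \<in> below 3 [x,y,z] \<Longrightarrow> \<exists>p q r. b = [p,q,r] \<and> p \<le> x \<and> q \<le> y \<and> r \<le> z"
proof -
  assume b: "b \<in> below 3 [x,y,z]"
  then have "length b = 3" by (simp add: below_def)
  then obtain p q r where bb: "b = [p,q,r]" using length3 by blast
  have h: "\<forall>i<3. b!i \<le> [x,y,z]!i" using b by (simp add: below_def)
  have "b!0 \<le> x" "b!1 \<le> y" "b!2 \<le> z"
    using h[rule_format, of 0] h[rule_format, of 1] h[rule_format, of 2] by auto
  then show ?thesis using bb by auto
qed

lemma rep3: "replicate 3 (0::nat) = [0,0,0]" by (simp add: eval_nat_numeral)

definition Wset :: "(nat \<Rightarrow> nat \<Rightarrow> nat \<Rightarrow> bool) \<Rightarrow> nat list set" where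
  "Wset w = {[x,y,z] | x y z. w x y z}"

lemma Wset_mem: "[x,y,z] \<in> Wset w \<longleftrightarrow> w x y z"
  by (auto simp: Wset_def)

lemma Wset_len: "Wset w \<subseteq> {a. length a = 3}"
  by (auto simp: Wset_def)

lemma Wset_clos:
  assumes "\<And>x y z p q r. w x y z \<Longrightarrow> p \<le> x \<Longrightarrow> q \<le> y \<Longrightarrow> r \<le> z \<Longrightarrow> (p,q,r) \<noteq> (0,0,0) \<Longrightarrow> (p,q,r) \<noteq> (x,y,z)
      \<Longrightarrow> w p q r \<or> w (x-p) (y-q) (z-r)"
  shows "\<And>a b. a \<in> Wset w \<Longrightarrow> b \<in> below 3 a \<Longrightarrow> b \<noteq> replicate 3 0 \<Longrightarrow> b \<noteq> a \<Longrightarrow> b \<in> Wset w \<or> map2 (-) a b \<in> Wset w"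
proof -
  fix a b assume a: "a \<in> Wset w" and b: "b \<in> below 3 a" and b0: "b \<noteq> replicate 3 0" and ba: "b \<noteq> a"
  obtain x y z where ax: "a = [x,y,z]" "w x y z" using a by (auto simp: Wset_def)
  obtain p q r where bp: "b = [p,q,r]" "p \<le> x" "q \<le> y" "r \<le> z" using below3 b ax by blast
  have "w p q r \<or> w (x-p) (y-q) (z-r)"
    by (rule assms) (use ax bp b0 ba rep3 in auto)
  then show "b \<in> Wset w \<or> map2 (-) a b \<in> Wset w" using ax bp by (auto simp: Wset_mem)
qed

lemma Wset_0: "(\<And>x y z. w x y z \<Longrightarrow> (x,y,z) \<noteq> (0,0,0)) \<Longrightarrow> replicate 3 0 \<notin> Wset w"
  by (auto simp: Wset_def rep3)

lemma mnm_ne1: "x \<noteq> 0 \<Longrightarrow> (2::'a::field_char_0) ^ x \<noteq> 1"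
  using two_pow_inj[of x 0] by auto

lemma half_two_ne1: "x \<noteq> y \<Longrightarrow> (1/2::'a::field_char_0) ^ x * 2 ^ y \<noteq> 1"
proof
  assume "x \<noteq> y" "(1/2::'a) ^ x * 2 ^ y = 1"
  then have "(1/2::'a) ^ x * 2 ^ y * 2 ^ x = 2 ^ x" by simp
  moreover have "(1/2::'a) ^ x * 2 ^ x = 1" by (simp add: power_mult_distrib[symmetric])
  ultimately have "(2::'a) ^ y = 2 ^ x" by (metis mult.commute mult.left_neutral mult.assoc)
  then show False using two_pow_inj \<open>x \<noteq> y\<close> by metis
qed

definition wa :: "nat \<Rightarrow> nat \<Rightarrow> nat \<Rightarrow> bool" where
  "wa x y z \<longleftrightarrow> (x,y,z) \<noteq> (0,0,0) \<and> ((y = 0 \<and> z = 0) \<or> (x = 0 \<and> z = 0) \<or> (x = 0 \<and> y = 0) \<or> (z = 0 \<and> x \<noteq> y)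
     \<or> (x,y,z) = (1,1,0) \<or> (x,y,z) = (2,2,1))"

lemma wa_clos: "wa x y z \<Longrightarrow> p \<le> x \<Longrightarrow> q \<le> y \<Longrightarrow> r \<le> z \<Longrightarrow> (p,q,r) \<noteq> (0,0,0) \<Longrightarrow> (p,q,r) \<noteq> (x,y,z)
      \<Longrightarrow> wa p q r \<or> wa (x-p) (y-q) (z-r)"
proof -
  assume w: "wa x y z" and le: "p \<le> x" "q \<le> y" "r \<le> z" and nz: "(p,q,r) \<noteq> (0,0,0)" and ne: "(p,q,r) \<noteq> (x,y,z)"
  consider "y = 0 \<and> z = 0" | "x = 0 \<and> z = 0" | "x = 0 \<and> y = 0" | "z = 0 \<and> x \<noteq> y"
    | "(x,y,z) = (1,1,0)" | "(x,y,z) = (2,2,1)" using w unfolding wa_def by blast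
  then show ?thesis
  proof cases
    case 1 then show ?thesis using le nz unfolding wa_def by auto
  next
    case 2 then show ?thesis using le nz unfolding wa_def by auto
  next
    case 3 then show ?thesis using le nz unfolding wa_def by auto
  next
    case 4
    show ?thesis
    proof (cases "p = q")
      case True
      then have "x - p \<noteq> y - q" using 4 le by auto
      then show ?thesis using 4 le unfolding wa_def by auto
    next
      case False
      then show ?thesis using 4 le nz unfolding wa_def by auto
    qed
  next
    case 5 then have "(p,q,r) = (1,0,0) \<or> (p,q,r) = (0,1,0)" using le nz ne by auto
    then show ?thesis unfolding wa_def by auto
  next
    case 6
    then have xyz: "x = 2" "y = 2" "z = 1" by auto
    show ?thesis
    proof (cases "r = 0")
      case r0: True
      show ?thesis
      proof (cases "p = q")
        case False then show ?thesis using r0 nz unfolding wa_def by auto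
      next
        case True
        then have "p = 1 \<or> p = 2" using nz r0 le xyz by auto
        then show ?thesis using True r0 xyz unfolding wa_def by auto
      qed
    next
      case r1: False
      then have r: "r = 1" using le xyz by auto
      show ?thesis
      proof (cases "p = q")
        case False
        then have "x - p \<noteq> y - q" using le xyz by auto
        then show ?thesis using r xyz unfolding wa_def by auto
      next
        case True
        then have "p = 0 \<or> p = 1" using ne r le xyz by auto
        then show ?thesis using True r xyz unfolding wa_def by auto
      qed
    qed
  qed
qed

lemma lin3_slots: "linfam 3 (\<lambda>k. [slot0 A, slot1 B, slot2 C] ! k) v = (smat (v 0) A, smat (v 1) B, smat (v 2) (C::'a::field mat3))"
  by (simp add: lin3 slot0_def slot1_def slot2_def)

lemma nil_slots: "A ** (A ** A) = 0 \<Longrightarrow> B ** (B ** B) = 0 \<Longrightarrow> C ** (C ** C) = 0 \<Longrightarrow>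
  linfam 3 (\<lambda>k. [slot0 A, slot1 B, slot2 C] ! k) v \<in> nil_triples"
  by (simp add: lin3_slots nil_triples_def nilp_smat)

lemma Um_cube: "Um ** (Um ** Um) = (0::'a::field_char_0 mat3)" by (simp add: csimps)
lemma Lm_cube: "Lm ** (Lm ** Lm) = (0::'a::field_char_0 mat3)" by (simp add: csimps)

lemma nilp_zero: "mat_nilpotent (0::'a::field mat3)"
  by (rule nilp3) simp

lemma conj3_id: "conj3 (mat 1) (mat 1) T = (T::'a::field triple)"
  by (simp add: conj3_def)

lemma kill110:
  fixes g :: "'a::field_char_0 triple \<Rightarrow> 'a"
  assumes hi: "hom_invariant e g" and wf: "wfl 3 L"
    and rep: "\<forall>v. g (linfam 3 (\<lambda>k. [slot0 Um, slot1 Lm, T2] ! k) v) = evalp L v"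
  shows "coeffp L [1,1,0] = 0"
proof -
  let ?Ts = "\<lambda>k. [slot0 Um, slot1 Lm, T2] ! k"
  let ?Ts2 = "\<lambda>k. [slot0 (Um::'a mat3), slot1 Lm, (0,0,0)] ! k"
  have N2: "\<And>v. linfam 3 ?Ts2 v \<in> nil_triples"
    by (simp add: lin3 slot0_def slot1_def nil_triples_def) (auto intro!: nilp_smat Um_cube Lm_cube nilp_zero)
  have "g \<in> poly_funs" using hi by (simp add: hom_invariant_def)
  then obtain L2 where L2: "wfl 3 L2" "\<And>v. g (linfam 3 ?Ts2 v) = evalp L2 v" using poly_rep by blast
  have 1: "mat 1 ** mat 1 = (mat 1::'a mat3)" by simp
  have 2: "conj3 (mat 1) (mat 1) (?Ts2 k) = ?Ts k" if "k < 3" "k \<notin> {2}" for k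
  proof -
    have "k = 0 \<or> k = 1" using that by auto
    then show ?thesis by (auto simp: conj3_id)
  qed
  have 3: "g (linfam 3 ?Ts v) = evalp L v" for v using rep by simp
  have "coeffp L [1,1,0] = coeffp L2 [1,1,0]"
    by (rule transfer_conj[OF hi N2 1 1 2 wf 3 L2(1) L2(2)]) auto
  also have "\<dots> = 0" by (rule pairUL01[OF hi L2])
  finally show ?thesis .
qed

lemma kills_a:
  fixes g :: "'a::field_char_0 triple \<Rightarrow> 'a"
  assumes Z: "Zm ** (Zm ** Zm) = 0" "PZ ** PZi = mat 1" "PZi ** PZ = mat 1" "PZ ** Zm ** PZi = smat 2 Zm"
    and e: "e < 5" and hi: "hom_invariant e g" and wf: "wfl 3 L"
    and rep: "\<forall>v. g (linfam 3 (\<lambda>k. [slot0 Um, slot1 Lm, slot2 Zm] ! k) v) = evalp L v"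
    and a: "a \<in> Wset wa"
  shows "coeffp L a = 0"
proof -
  let ?Ts = "\<lambda>k. [slot0 Um, slot1 Lm, slot2 Zm] ! k"
  have N: "\<And>v. linfam 3 ?Ts v \<in> nil_triples" by (rule nil_slots) (use Z Um_cube Lm_cube in auto)
  obtain x y z where a3: "a = [x,y,z]" and w: "wa x y z" using a by (auto simp: Wset_def)
  have ck: "coeffp L [x,y,z] * mnm s [x,y,z] = coeffp L [x,y,z]"
    if "P ** Q = mat 1" "Q ** P = mat 1" "\<And>k. k < 3 \<Longrightarrow> k \<notin> Zs \<Longrightarrow> conj3 P Q (?Ts k) = sc_triple (s k) (?Ts k)"
       "\<forall>i\<in>Zs. i < 3 \<longrightarrow> [x,y,z]!i = 0" for P Q s Zs
    by (rule conj_kill[OF hi N wf _ that(1,2)]) (use rep that in auto)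
  consider "(x,y,z) = (2,2,1)" | "y = 0 \<and> z = 0" | "x = 0 \<and> z = 0" | "x = 0 \<and> y = 0" | "z = 0 \<and> x \<noteq> y"
    | "(x,y,z) = (1,1,0)" using w unfolding wa_def by blast
  then show ?thesis
  proof cases
    case 1
    then show ?thesis using homog_kill[OF hi N wf, of a] rep e a3 by auto
  next
    case 2
    then have "x \<noteq> 0" using w by (auto simp: wa_def)
    have "coeffp L [x,y,z] * mnm (\<lambda>k. [2,1,1::'a] ! k) [x,y,z] = coeffp L [x,y,z]"
      by (rule ck[OF PU_inv, where Zs="{1,2}"])
         (use 2 in \<open>auto simp: less_Suc_eq eval_nat_numeral conj3_slot sc_slot PU_Um\<close>)
    then have "coeffp L [x,y,z] * 2^x = coeffp L [x,y,z]" using 2 by (simp add: mnm3)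
    then show ?thesis using coeff_kill_factor mnm_ne1[OF \<open>x \<noteq> 0\<close>] a3 by blast
  next
    case 3
    then have "y \<noteq> 0" using w by (auto simp: wa_def)
    have "coeffp L [x,y,z] * mnm (\<lambda>k. [1,2,1::'a] ! k) [x,y,z] = coeffp L [x,y,z]"
      by (rule ck[OF PU_inv(2,1), where Zs="{0,2}"])
         (use 3 in \<open>auto simp: less_Suc_eq eval_nat_numeral conj3_slot sc_slot PL_Lm\<close>)
    then have "coeffp L [x,y,z] * 2^y = coeffp L [x,y,z]" using 3 by (simp add: mnm3)
    then show ?thesis using coeff_kill_factor mnm_ne1[OF \<open>y \<noteq> 0\<close>] a3 by blast
  next
    case 4
    then have "z \<noteq> 0" using w by (auto simp: wa_def)
    have "coeffp L [x,y,z] * mnm (\<lambda>k. [1,1,2::'a] ! k) [x,y,z] = coeffp L [x,y,z]"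
      by (rule ck[OF Z(2,3), where Zs="{0,1}"])
         (use 4 Z(4) in \<open>auto simp: less_Suc_eq eval_nat_numeral conj3_slot sc_slot\<close>)
    then have "coeffp L [x,y,z] * 2^z = coeffp L [x,y,z]" using 4 by (simp add: mnm3)
    then show ?thesis using coeff_kill_factor mnm_ne1[OF \<open>z \<noteq> 0\<close>] a3 by blast
  next
    case 5
    have "coeffp L [x,y,z] * mnm (\<lambda>k. [1/2,2,1::'a] ! k) [x,y,z] = coeffp L [x,y,z]"
      by (rule ck[OF PU_inv(2,1), where Zs="{2}"])
         (use 5 in \<open>auto simp: less_Suc_eq eval_nat_numeral conj3_slot sc_slot PL_Lm PL_Um\<close>)
    then have "coeffp L [x,y,z] * ((1/2)^x * 2^y) = coeffp L [x,y,z]" using 5 by (simp add: mnm3)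
    then show ?thesis using coeff_kill_factor half_two_ne1[of x y] 5 a3 by blast
  next
    case 6
    then show ?thesis using kill110[OF hi wf rep] a3 by simp
  qed
qed




lemma hom_a:
  fixes \<alpha>1 \<alpha>2 :: "'a::field_char_0"
  shows "hom_invariant 5 (\<lambda>(Y1 :: 'a mat3, Y2 :: 'a mat3, Y3 :: 'a mat3).
            \<alpha>1 * trace (Y1 ** Y1 ** Y2 ** Y2 ** Y3) + \<alpha>2 * trace (Y2 ** Y2 ** Y1 ** Y1 ** Y3))"
  unfolding hom_invariant_def
proof (intro conjI allI impI)
  have "(\<lambda>(Y1 :: 'a mat3, Y2 :: 'a mat3, Y3 :: 'a mat3).
            \<alpha>1 * trace (Y1 ** Y1 ** Y2 ** Y2 ** Y3) + \<alpha>2 * trace (Y2 ** Y2 ** Y1 ** Y1 ** Y3))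
     = (\<lambda>T. \<alpha>1 * trace (fst T ** fst T ** fst (snd T) ** fst (snd T) ** snd (snd T))
          + \<alpha>2 * trace (fst (snd T) ** fst (snd T) ** fst T ** fst T ** snd (snd T)))"
    by (simp add: fun_eq_iff split_def)
  also have "\<dots> \<in> poly_funs"
    by (intro poly_add poly_scal trace_poly pmat_mult pmat_fst)
  finally show "(\<lambda>(Y1 :: 'a mat3, Y2 :: 'a mat3, Y3 :: 'a mat3).
            \<alpha>1 * trace (Y1 ** Y1 ** Y2 ** Y2 ** Y3) + \<alpha>2 * trace (Y2 ** Y2 ** Y1 ** Y1 ** Y3)) \<in> poly_funs" .
next
  fix P :: "'a mat3" and T :: "'a triple"
  assume "invertible P"
  then obtain Q where Q: "Q ** P = mat 1"
    and c: "conj_triple P T = ((P ** fst T) ** Q, (P ** fst (snd T)) ** Q, (P ** snd (snd T)) ** Q)"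
    using conj_triple_inv by blast
  show "(case conj_triple P T of (Y1, Y2, Y3) \<Rightarrow> \<alpha>1 * trace (Y1 ** Y1 ** Y2 ** Y2 ** Y3) + \<alpha>2 * trace (Y2 ** Y2 ** Y1 ** Y1 ** Y3)) =
        (case T of (Y1, Y2, Y3) \<Rightarrow> \<alpha>1 * trace (Y1 ** Y1 ** Y2 ** Y2 ** Y3) + \<alpha>2 * trace (Y2 ** Y2 ** Y1 ** Y1 ** Y3))"
    by (simp add: c split_def conj_mul[OF Q] conj_trace[OF Q])
next
  fix t :: 'a and T :: "'a triple"
  show "(case scale_triple t T of (Y1, Y2, Y3) \<Rightarrow> \<alpha>1 * trace (Y1 ** Y1 ** Y2 ** Y2 ** Y3) + \<alpha>2 * trace (Y2 ** Y2 ** Y1 ** Y1 ** Y3)) =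
        t ^ 5 * (case T of (Y1, Y2, Y3) \<Rightarrow> \<alpha>1 * trace (Y1 ** Y1 ** Y2 ** Y2 ** Y3) + \<alpha>2 * trace (Y2 ** Y2 ** Y1 ** Y1 ** Y3))"
    by (simp add: scale_triple_eq sc_triple_def split_def smat_mult trace_smat algebra_simps eval_nat_numeral)
qed

lemma notdec_a_gen:
  fixes \<alpha>1 \<alpha>2 :: "'a::field_char_0"
  assumes Z: "Zm ** (Zm ** Zm) = 0" "PZ ** PZi = mat 1" "PZi ** PZ = mat 1" "PZ ** Zm ** PZi = smat 2 Zm"
    and c0: "\<alpha>1 * trace (Um ** Um ** Lm ** Lm ** Zm) + \<alpha>2 * trace (Lm ** Lm ** Um ** Um ** Zm) \<noteq> 0"
  shows "\<not> decomposable 5 (\<lambda>(Y1 :: 'a mat3, Y2 :: 'a mat3, Y3 :: 'a mat3).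
            \<alpha>1 * trace (Y1 ** Y1 ** Y2 ** Y2 ** Y3) + \<alpha>2 * trace (Y2 ** Y2 ** Y1 ** Y1 ** Y3))"
proof (rule main_generic[where n=3 and Ts="\<lambda>k. [slot0 Um, slot1 Lm, slot2 Zm] ! k" and mstar="[2,2,1]" and W="Wset wa"])
  show "linfam 3 (\<lambda>k. [slot0 Um, slot1 Lm, slot2 Zm] ! k) v \<in> nil_triples" for v
    by (rule nil_slots) (use Z Um_cube Lm_cube in auto)
  show "(case linfam 3 (\<lambda>k. [slot0 Um, slot1 Lm, slot2 Zm] ! k) v of (Y1, Y2, Y3) \<Rightarrow> \<alpha>1 * trace (Y1 ** Y1 ** Y2 ** Y2 ** Y3) + \<alpha>2 * trace (Y2 ** Y2 ** Y1 ** Y1 ** Y3))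
        = (\<alpha>1 * trace (Um ** Um ** Lm ** Lm ** Zm) + \<alpha>2 * trace (Lm ** Lm ** Um ** Um ** Zm)) * mnm v [2,2,1]" for v
    by (simp add: lin3_slots smat_mult trace_smat mnm3 algebra_simps power2_eq_square)
  show "Wset wa \<subseteq> {a. length a = 3}" by (rule Wset_len)
  show "replicate 3 0 \<notin> Wset wa" by (rule Wset_0) (auto simp: wa_def)
  show "[2,2,1] \<in> Wset wa" by (simp add: Wset_mem wa_def)
  show "\<And>a b. a \<in> Wset wa \<Longrightarrow> b \<in> below 3 a \<Longrightarrow> b \<noteq> replicate 3 0 \<Longrightarrow> b \<noteq> a \<Longrightarrow> b \<in> Wset wa \<or> map2 (-) a b \<in> Wset wa"
    by (rule Wset_clos[where w=wa, OF wa_clos])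
  show "\<And>g e L a. e < 5 \<Longrightarrow> hom_invariant e g \<Longrightarrow> wfl 3 L \<Longrightarrow> (\<forall>v. g (linfam 3 (\<lambda>k. [slot0 Um, slot1 Lm, slot2 Zm] ! k) v) = evalp L v)
                  \<Longrightarrow> a \<in> Wset wa \<Longrightarrow> coeffp L a = 0"
    by (rule kills_a[OF Z]) auto
qed (use c0 in auto)

definition N12 :: "'a::field mat3" where "N12 = mk3 1 1 0 (-1) (-1) 0 0 0 0"
definition N23 :: "'a::field mat3" where "N23 = mk3 0 0 0 0 1 1 0 (-1) (-1)"

lemma notdec_a:
  fixes \<alpha>1 \<alpha>2 :: "'a::field_char_0"
  assumes "\<alpha>1 \<noteq> 0 \<or> \<alpha>2 \<noteq> 0"
  shows "\<not> decomposable 5 (\<lambda>(Y1 :: 'a mat3, Y2 :: 'a mat3, Y3 :: 'a mat3).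
            \<alpha>1 * trace (Y1 ** Y1 ** Y2 ** Y2 ** Y3) + \<alpha>2 * trace (Y2 ** Y2 ** Y1 ** Y1 ** Y3))"
proof (cases "\<alpha>1 = 0")
  case False
  show ?thesis
  proof (rule notdec_a_gen[where Zm = N12 and PZ = "mk3 1 (-1) 0 0 2 0 0 0 1" and PZi = "mk3 1 (1/2) 0 0 (1/2) 0 0 0 1"])
    show "\<alpha>1 * trace (Um ** Um ** Lm ** Lm ** N12) + \<alpha>2 * trace (Lm ** Lm ** Um ** Um ** N12) \<noteq> 0"
      using False by (simp add: csimps N12_def)
  qed (simp_all add: csimps N12_def)
next
  case True
  then have "\<alpha>2 \<noteq> 0" using assms by simp
  show ?thesis
  proof (rule notdec_a_gen[where Zm = N23 and PZ = "mk3 1 0 0 0 1 (-1) 0 0 2" and PZi = "mk3 1 0 0 0 1 (1/2) 0 0 (1/2)"])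
    show "\<alpha>1 * trace (Um ** Um ** Lm ** Lm ** N23) + \<alpha>2 * trace (Lm ** Lm ** Um ** Um ** N23) \<noteq> 0"
      using True \<open>\<alpha>2 \<noteq> 0\<close> by (simp add: csimps N23_def)
  qed (simp_all add: csimps N23_def)
qed




lemma kill101_gen:
  fixes g :: "'a::field_char_0 triple \<Rightarrow> 'a"
  assumes hi: "hom_invariant e g" and wf: "wfl 3 L"
    and PQ: "P ** Q = mat 1" "Q ** P = mat 1" "P ** Um ** Q = Um" "P ** Lm ** Q = Y3"
    and rep: "\<forall>v. g (linfam 3 (\<lambda>k. [slot0 Um, T1, slot2 Y3] ! k) v) = evalp L v"
  shows "coeffp L [1,0,1] = 0"
proof -
  let ?Ts = "\<lambda>k. [slot0 Um, T1, slot2 Y3] ! k"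
  let ?Ts2 = "\<lambda>k. [slot0 (Um::'a mat3), (0,0,0), slot2 Lm] ! k"
  have N2: "\<And>v. linfam 3 ?Ts2 v \<in> nil_triples"
    by (simp add: lin3 slot0_def slot2_def nil_triples_def) (auto intro!: nilp_smat Um_cube Lm_cube nilp_zero)
  have "g \<in> poly_funs" using hi by (simp add: hom_invariant_def)
  then obtain L2 where L2: "wfl 3 L2" "\<And>v. g (linfam 3 ?Ts2 v) = evalp L2 v" using poly_rep by blast
  have 2: "conj3 P Q (?Ts2 k) = ?Ts k" if "k < 3" "k \<notin> {1}" for k
  proof -
    have "k = 0 \<or> k = 2" using that by auto
    then show ?thesis using PQ by (auto simp: conj3_slot)
  qed
  have 3: "g (linfam 3 ?Ts v) = evalp L v" for v using rep by simp
  have "coeffp L [1,0,1] = coeffp L2 [1,0,1]"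
    by (rule transfer_conj[OF hi N2 PQ(1,2) 2 wf 3 L2(1) L2(2)]) auto
  also have "\<dots> = 0" by (rule pairUL02[OF hi L2])
  finally show ?thesis .
qed

lemma kill011_gen:
  fixes g :: "'a::field_char_0 triple \<Rightarrow> 'a"
  assumes hi: "hom_invariant e g" and wf: "wfl 3 L"
    and PQ: "P ** Q = mat 1" "Q ** P = mat 1" "P ** Lm ** Q = Y2" "P ** Um ** Q = Y3"
    and rep: "\<forall>v. g (linfam 3 (\<lambda>k. [T0, slot1 Y2, slot2 Y3] ! k) v) = evalp L v"
  shows "coeffp L [0,1,1] = 0"
proof -
  let ?Ts = "\<lambda>k. [T0, slot1 Y2, slot2 Y3] ! k"
  let ?Ts2 = "\<lambda>k. [(0,0,0), slot1 (Lm::'a mat3), slot2 Um] ! k"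
  have N2: "\<And>v. linfam 3 ?Ts2 v \<in> nil_triples"
    by (simp add: lin3 slot1_def slot2_def nil_triples_def) (auto intro!: nilp_smat Um_cube Lm_cube nilp_zero)
  have "g \<in> poly_funs" using hi by (simp add: hom_invariant_def)
  then obtain L2 where L2: "wfl 3 L2" "\<And>v. g (linfam 3 ?Ts2 v) = evalp L2 v" using poly_rep by blast
  have 2: "conj3 P Q (?Ts2 k) = ?Ts k" if "k < 3" "k \<notin> {0}" for k
  proof -
    have "k = 1 \<or> k = 2" using that by auto
    then show ?thesis using PQ by (auto simp: conj3_slot)
  qed
  have 3: "g (linfam 3 ?Ts v) = evalp L v" for v using rep by simp
  have "coeffp L [0,1,1] = coeffp L2 [0,1,1]"
    by (rule transfer_conj[where Z="{0}", OF hi N2 PQ(1,2) 2 wf 3 L2(1) L2(2)]) auto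
  also have "\<dots> = 0" by (rule pairLU12[OF hi L2])
  finally show ?thesis .
qed

definition wb :: "nat \<Rightarrow> nat \<Rightarrow> nat \<Rightarrow> bool" where
  "wb x y z \<longleftrightarrow> (x,y,z) \<noteq> (0,0,0) \<and> ((y = 0 \<and> z = 0) \<or> (x = 0 \<and> z = 0) \<or> (x = 0 \<and> y = 0) \<or> (z = 0 \<and> x \<noteq> y)
     \<or> (x,y,z) = (1,1,0) \<or> (x,y,z) = (1,0,1) \<or> (x,y,z) = (3,2,1))"

lemma wb_clos: "wb x y z \<Longrightarrow> p \<le> x \<Longrightarrow> q \<le> y \<Longrightarrow> r \<le> z \<Longrightarrow> (p,q,r) \<noteq> (0,0,0) \<Longrightarrow> (p,q,r) \<noteq> (x,y,z)
      \<Longrightarrow> wb p q r \<or> wb (x-p) (y-q) (z-r)"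
proof -
  assume w: "wb x y z" and le: "p \<le> x" "q \<le> y" "r \<le> z" and nz: "(p,q,r) \<noteq> (0,0,0)" and ne: "(p,q,r) \<noteq> (x,y,z)"
  consider "y = 0 \<and> z = 0" | "x = 0 \<and> z = 0" | "x = 0 \<and> y = 0" | "z = 0 \<and> x \<noteq> y"
    | "(x,y,z) = (1,1,0)" | "(x,y,z) = (1,0,1)" | "(x,y,z) = (3,2,1)" using w unfolding wb_def by blast
  then show ?thesis
  proof cases
    case 1 then show ?thesis using le nz unfolding wb_def by auto
  next
    case 2 then show ?thesis using le nz unfolding wb_def by auto
  next
    case 3 then show ?thesis using le nz unfolding wb_def by auto
  next
    case 4
    show ?thesis
    proof (cases "p = q")
      case True
      then have "x - p \<noteq> y - q" using 4 le by auto
      then show ?thesis using 4 le unfolding wb_def by auto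
    next
      case False
      then show ?thesis using 4 le nz unfolding wb_def by auto
    qed
  next
    case 5 then have "(p,q,r) = (1,0,0) \<or> (p,q,r) = (0,1,0)" using le nz ne by auto
    then show ?thesis unfolding wb_def by auto
  next
    case 6 then have "(p,q,r) = (1,0,0) \<or> (p,q,r) = (0,0,1)" using le nz ne by auto
    then show ?thesis unfolding wb_def by auto
  next
    case 7
    then have xyz: "x = 3" "y = 2" "z = 1" by auto
    show ?thesis
    proof (cases "r = 0")
      case r0: True
      show ?thesis
      proof (cases "p = q")
        case False then show ?thesis using r0 nz unfolding wb_def by auto
      next
        case True
        then have "p = 1 \<or> p = 2" using nz r0 le xyz by auto
        then show ?thesis using True r0 xyz unfolding wb_def by auto
      qed
    next
      case r1: False
      then have r: "r = 1" using le xyz by auto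
      show ?thesis
      proof (cases "x - p = y - q")
        case False
        then show ?thesis using r xyz unfolding wb_def by auto
      next
        case True
        then have "(p = 1 \<and> q = 0) \<or> (p = 2 \<and> q = 1)" using ne r le xyz by auto
        then show ?thesis using r xyz unfolding wb_def by auto
      qed
    qed
  qed
qed

lemma kills_b:
  fixes g :: "'a::field_char_0 triple \<Rightarrow> 'a"
  assumes e: "e < 6" and hi: "hom_invariant e g" and wf: "wfl 3 L"
    and rep: "\<forall>v. g (linfam 3 (\<lambda>k. [slot0 Um, slot1 Lm, slot2 Lm] ! k) v) = evalp L v"
    and a: "a \<in> Wset wb"
  shows "coeffp L a = 0"
proof -
  let ?Ts = "\<lambda>k. [slot0 Um, slot1 Lm, slot2 (Lm::'a mat3)] ! k"
  have N: "\<And>v. linfam 3 ?Ts v \<in> nil_triples" by (rule nil_slots) (use Um_cube Lm_cube in auto)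
  obtain x y z where a3: "a = [x,y,z]" and w: "wb x y z" using a by (auto simp: Wset_def)
  have ck: "coeffp L [x,y,z] * mnm s [x,y,z] = coeffp L [x,y,z]"
    if "P ** Q = mat 1" "Q ** P = mat 1" "\<And>k. k < 3 \<Longrightarrow> k \<notin> Zs \<Longrightarrow> conj3 P Q (?Ts k) = sc_triple (s k) (?Ts k)"
       "\<forall>i\<in>Zs. i < 3 \<longrightarrow> [x,y,z]!i = 0" for P Q s Zs
    by (rule conj_kill[OF hi N wf _ that(1,2)]) (use rep that in auto)
  consider "(x,y,z) = (3,2,1)" | "y = 0 \<and> z = 0" | "x = 0 \<and> z = 0" | "x = 0 \<and> y = 0" | "z = 0 \<and> x \<noteq> y"
    | "(x,y,z) = (1,1,0)" | "(x,y,z) = (1,0,1)" using w unfolding wb_def by blast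
  then show ?thesis
  proof cases
    case 1
    then show ?thesis using homog_kill[OF hi N wf, of a] rep e a3 by auto
  next
    case 2
    then have "x \<noteq> 0" using w by (auto simp: wb_def)
    have "coeffp L [x,y,z] * mnm (\<lambda>k. [2,1,1::'a] ! k) [x,y,z] = coeffp L [x,y,z]"
      by (rule ck[OF PU_inv, where Zs="{1,2}"])
         (use 2 in \<open>auto simp: less_Suc_eq eval_nat_numeral conj3_slot sc_slot PU_Um\<close>)
    then have "coeffp L [x,y,z] * 2^x = coeffp L [x,y,z]" using 2 by (simp add: mnm3)
    then show ?thesis using coeff_kill_factor mnm_ne1[OF \<open>x \<noteq> 0\<close>] a3 by blast
  next
    case 3
    then have "y \<noteq> 0" using w by (auto simp: wb_def)
    have "coeffp L [x,y,z] * mnm (\<lambda>k. [1,2,1::'a] ! k) [x,y,z] = coeffp L [x,y,z]"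
      by (rule ck[OF PU_inv(2,1), where Zs="{0,2}"])
         (use 3 in \<open>auto simp: less_Suc_eq eval_nat_numeral conj3_slot sc_slot PL_Lm\<close>)
    then have "coeffp L [x,y,z] * 2^y = coeffp L [x,y,z]" using 3 by (simp add: mnm3)
    then show ?thesis using coeff_kill_factor mnm_ne1[OF \<open>y \<noteq> 0\<close>] a3 by blast
  next
    case 4
    then have "z \<noteq> 0" using w by (auto simp: wb_def)
    have "coeffp L [x,y,z] * mnm (\<lambda>k. [1,1,2::'a] ! k) [x,y,z] = coeffp L [x,y,z]"
      by (rule ck[OF PU_inv(2,1), where Zs="{0,1}"])
         (use 4 in \<open>auto simp: less_Suc_eq eval_nat_numeral conj3_slot sc_slot PL_Lm\<close>)
    then have "coeffp L [x,y,z] * 2^z = coeffp L [x,y,z]" using 4 by (simp add: mnm3)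
    then show ?thesis using coeff_kill_factor mnm_ne1[OF \<open>z \<noteq> 0\<close>] a3 by blast
  next
    case 5
    have "coeffp L [x,y,z] * mnm (\<lambda>k. [1/2,2,1::'a] ! k) [x,y,z] = coeffp L [x,y,z]"
      by (rule ck[OF PU_inv(2,1), where Zs="{2}"])
         (use 5 in \<open>auto simp: less_Suc_eq eval_nat_numeral conj3_slot sc_slot PL_Lm PL_Um\<close>)
    then have "coeffp L [x,y,z] * ((1/2)^x * 2^y) = coeffp L [x,y,z]" using 5 by (simp add: mnm3)
    then show ?thesis using coeff_kill_factor half_two_ne1[of x y] 5 a3 by blast
  next
    case 6
    then show ?thesis using kill110[OF hi wf rep] a3 by simp
  next
    case 7
    have "coeffp L [1,0,1] = 0"
      by (rule kill101_gen[OF hi wf, where P="mat 1" and Q="mat 1"]) (use rep in simp_all)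
    then show ?thesis using 7 a3 by simp
  qed
qed

lemma hom_b:
  shows "hom_invariant 6 (\<lambda>(Y1 :: 'a::field_char_0 mat3, Y2 :: 'a mat3, Y3 :: 'a mat3). trace (Y1 ** Y1 ** Y2 ** Y2 ** Y1 ** Y3))"
  unfolding hom_invariant_def
proof (intro conjI allI impI)
  have "(\<lambda>(Y1 :: 'a mat3, Y2 :: 'a mat3, Y3 :: 'a mat3). trace (Y1 ** Y1 ** Y2 ** Y2 ** Y1 ** Y3))
     = (\<lambda>T. trace (fst T ** fst T ** fst (snd T) ** fst (snd T) ** fst T ** snd (snd T)))"
    by (simp add: fun_eq_iff split_def)
  also have "\<dots> \<in> poly_funs"
    by (intro poly_add poly_scal trace_poly pmat_mult pmat_fst)
  finally show "(\<lambda>(Y1 :: 'a mat3, Y2 :: 'a mat3, Y3 :: 'a mat3). trace (Y1 ** Y1 ** Y2 ** Y2 ** Y1 ** Y3)) \<in> poly_funs" .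
next
  fix P :: "'a mat3" and T :: "'a triple"
  assume "invertible P"
  then obtain Q where Q: "Q ** P = mat 1"
    and c: "conj_triple P T = ((P ** fst T) ** Q, (P ** fst (snd T)) ** Q, (P ** snd (snd T)) ** Q)"
    using conj_triple_inv by blast
  show "(case conj_triple P T of (Y1, Y2, Y3) \<Rightarrow> trace (Y1 ** Y1 ** Y2 ** Y2 ** Y1 ** Y3)) =
        (case T of (Y1, Y2, Y3) \<Rightarrow> trace (Y1 ** Y1 ** Y2 ** Y2 ** Y1 ** Y3))"
    by (simp add: c split_def conj_mul[OF Q] conj_trace[OF Q])
next
  fix t :: 'a and T :: "'a triple"
  show "(case scale_triple t T of (Y1, Y2, Y3) \<Rightarrow> trace (Y1 ** Y1 ** Y2 ** Y2 ** Y1 ** Y3)) =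
        t ^ 6 * (case T of (Y1, Y2, Y3) \<Rightarrow> trace (Y1 ** Y1 ** Y2 ** Y2 ** Y1 ** Y3))"
    by (simp add: scale_triple_eq sc_triple_def split_def smat_mult trace_smat algebra_simps eval_nat_numeral)
qed

lemma notdec_b:
  shows "\<not> decomposable 6 (\<lambda>(Y1 :: 'a::field_char_0 mat3, Y2 :: 'a mat3, Y3 :: 'a mat3). trace (Y1 ** Y1 ** Y2 ** Y2 ** Y1 ** Y3))"
proof (rule main_generic[where n=3 and Ts="\<lambda>k. [slot0 Um, slot1 Lm, slot2 (Lm::'a mat3)] ! k" and mstar="[3,2,1]" and W="Wset wb"])
  show "linfam 3 (\<lambda>k. [slot0 Um, slot1 Lm, slot2 (Lm::'a mat3)] ! k) v \<in> nil_triples" for v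
    by (rule nil_slots) (use Um_cube Lm_cube in auto)
  show "(case linfam 3 (\<lambda>k. [slot0 Um, slot1 Lm, slot2 Lm] ! k) v of (Y1, Y2, Y3) \<Rightarrow> trace (Y1 ** Y1 ** Y2 ** Y2 ** Y1 ** Y3))
        = trace (Um ** Um ** Lm ** Lm ** Um ** (Lm::'a mat3)) * mnm v [3,2,1]" for v
    by (simp add: lin3_slots smat_mult trace_smat mnm3 algebra_simps power2_eq_square power3_eq_cube)
  show "trace (Um ** Um ** Lm ** Lm ** Um ** (Lm::'a mat3)) \<noteq> 0" by (simp add: csimps)
  show "Wset wb \<subseteq> {a. length a = 3}" by (rule Wset_len)
  show "replicate 3 0 \<notin> Wset wb" by (rule Wset_0) (auto simp: wb_def)
  show "[3,2,1] \<in> Wset wb" by (simp add: Wset_mem wb_def)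
  show "\<And>a b. a \<in> Wset wb \<Longrightarrow> b \<in> below 3 a \<Longrightarrow> b \<noteq> replicate 3 0 \<Longrightarrow> b \<noteq> a \<Longrightarrow> b \<in> Wset wb \<or> map2 (-) a b \<in> Wset wb"
    by (rule Wset_clos[where w=wb, OF wb_clos])
  show "\<And>g e L a. e < 6 \<Longrightarrow> hom_invariant e g \<Longrightarrow> wfl 3 L \<Longrightarrow> (\<forall>v. g (linfam 3 (\<lambda>k. [slot0 Um, slot1 Lm, slot2 (Lm::'a mat3)] ! k) v) = evalp L v)
                  \<Longrightarrow> a \<in> Wset wb \<Longrightarrow> coeffp L a = 0"
    by (rule kills_b) auto
qed




definition ULm :: "'a::field mat3" where "ULm = mk3 0 1 0 (-1) 0 1 0 1 0"

definition wc :: "nat \<Rightarrow> nat \<Rightarrow> nat \<Rightarrow> bool" where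
  "wc x y z \<longleftrightarrow> (x,y,z) \<noteq> (0,0,0) \<and> ((y = 0 \<and> z = 0) \<or> (x = 0 \<and> z = 0) \<or> (x = 0 \<and> y = 0) \<or> odd (x+y+z)
     \<or> (x,y,z) = (1,1,0) \<or> (x,y,z) = (1,0,1) \<or> (x,y,z) = (0,1,1) \<or> (x,y,z) = (2,2,2))"

lemma wc_two: "p \<le> 2 \<Longrightarrow> q \<le> 2 \<Longrightarrow> r \<le> 2 \<Longrightarrow> p + q + r = 2 \<Longrightarrow> wc p q r"
proof -
  assume "p \<le> 2" "q \<le> 2" "r \<le> 2" "p + q + r = 2"
  moreover have "p \<in> {0,1,2}" "q \<in> {0,1,2}" "r \<in> {0,1,2}" using calculation by auto
  ultimately show ?thesis unfolding wc_def by auto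
qed

lemma wc_clos: "wc x y z \<Longrightarrow> p \<le> x \<Longrightarrow> q \<le> y \<Longrightarrow> r \<le> z \<Longrightarrow> (p,q,r) \<noteq> (0,0,0) \<Longrightarrow> (p,q,r) \<noteq> (x,y,z)
      \<Longrightarrow> wc p q r \<or> wc (x-p) (y-q) (z-r)"
proof -
  assume w: "wc x y z" and le: "p \<le> x" "q \<le> y" "r \<le> z" and nz: "(p,q,r) \<noteq> (0,0,0)" and ne: "(p,q,r) \<noteq> (x,y,z)"
  have nz2: "(x-p, y-q, z-r) \<noteq> (0,0,0)" using le ne by auto
  have sum: "(x-p) + (y-q) + (z-r) = (x+y+z) - (p+q+r)" "p+q+r \<le> x+y+z" using le by auto
  show ?thesis
  proof (cases "odd (p+q+r)")
    case True then show ?thesis using nz unfolding wc_def by auto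
  next
    case ev: False
    consider "y = 0 \<and> z = 0" | "x = 0 \<and> z = 0" | "x = 0 \<and> y = 0" | "odd (x+y+z)"
      | "(x,y,z) = (1,1,0)" | "(x,y,z) = (1,0,1)" | "(x,y,z) = (0,1,1)" | "(x,y,z) = (2,2,2)"
      using w unfolding wc_def by blast
    then show ?thesis
    proof cases
      case 1 then show ?thesis using le nz unfolding wc_def by auto
    next
      case 2 then show ?thesis using le nz unfolding wc_def by auto
    next
      case 3 then show ?thesis using le nz unfolding wc_def by auto
    next
      case 4
      then have "odd ((x-p) + (y-q) + (z-r))" using ev sum by auto
      then show ?thesis using nz2 unfolding wc_def by auto
    next
      case 5 then show ?thesis using le nz unfolding wc_def by auto
    next
      case 6 then show ?thesis using le nz unfolding wc_def by auto
    next
      case 7 then show ?thesis using le nz unfolding wc_def by auto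
    next
      case 8
      then have xyz: "x = 2" "y = 2" "z = 2" by auto
      have "p + q + r \<noteq> 0" using nz by auto
      moreover have "p + q + r \<noteq> 6" using ne le xyz by auto
      moreover have "p + q + r \<le> 6" using le xyz by auto
      ultimately have "p + q + r = 2 \<or> p + q + r = 4" using ev by presburger
      then show ?thesis
      proof
        assume "p + q + r = 2" then show ?thesis using wc_two le xyz by auto
      next
        assume "p + q + r = 4"
        then have "wc (x-p) (y-q) (z-r)" using wc_two[of "x-p" "y-q" "z-r"] le xyz by auto
        then show ?thesis by auto
      qed
    qed
  qed
qed

lemma ULm_cube: "ULm ** (ULm ** ULm) = (0::'a::field_char_0 mat3)" by (simp add: ULm_def csimps)

lemma kills_c:
  fixes g :: "'a::field_char_0 triple \<Rightarrow> 'a"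
  assumes e: "e < 6" and hi: "hom_invariant e g" and wf: "wfl 3 L"
    and rep: "\<forall>v. g (linfam 3 (\<lambda>k. [slot0 Um, slot1 Lm, slot2 ULm] ! k) v) = evalp L v"
    and a: "a \<in> Wset wc"
  shows "coeffp L a = 0"
proof -
  let ?Ts = "\<lambda>k. [slot0 Um, slot1 Lm, slot2 (ULm::'a mat3)] ! k"
  have N: "\<And>v. linfam 3 ?Ts v \<in> nil_triples" by (rule nil_slots) (use Um_cube Lm_cube ULm_cube in auto)
  obtain x y z where a3: "a = [x,y,z]" and w: "wc x y z" using a by (auto simp: Wset_def)
  have ck: "coeffp L [x,y,z] * mnm s [x,y,z] = coeffp L [x,y,z]"
    if "P ** Q = mat 1" "Q ** P = mat 1" "\<And>k. k < 3 \<Longrightarrow> k \<notin> Zs \<Longrightarrow> conj3 P Q (?Ts k) = sc_triple (s k) (?Ts k)"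
       "\<forall>i\<in>Zs. i < 3 \<longrightarrow> [x,y,z]!i = 0" for P Q s Zs
    by (rule conj_kill[OF hi N wf _ that(1,2)]) (use rep that in auto)
  consider "(x,y,z) = (2,2,2)" | "y = 0 \<and> z = 0" | "x = 0 \<and> z = 0" | "x = 0 \<and> y = 0" | "odd (x+y+z)"
    | "(x,y,z) = (1,1,0)" | "(x,y,z) = (1,0,1)" | "(x,y,z) = (0,1,1)" using w unfolding wc_def by blast
  then show ?thesis
  proof cases
    case 1
    then show ?thesis using homog_kill[OF hi N wf, of a] rep e a3 by auto
  next
    case 2
    then have "x \<noteq> 0" using w by (auto simp: wc_def)
    have "coeffp L [x,y,z] * mnm (\<lambda>k. [2,1,1::'a] ! k) [x,y,z] = coeffp L [x,y,z]"
      by (rule ck[OF PU_inv, where Zs="{1,2}"])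
         (use 2 in \<open>auto simp: less_Suc_eq eval_nat_numeral conj3_slot sc_slot PU_Um\<close>)
    then have "coeffp L [x,y,z] * 2^x = coeffp L [x,y,z]" using 2 by (simp add: mnm3)
    then show ?thesis using coeff_kill_factor mnm_ne1[OF \<open>x \<noteq> 0\<close>] a3 by blast
  next
    case 3
    then have "y \<noteq> 0" using w by (auto simp: wc_def)
    have "coeffp L [x,y,z] * mnm (\<lambda>k. [1,2,1::'a] ! k) [x,y,z] = coeffp L [x,y,z]"
      by (rule ck[OF PU_inv(2,1), where Zs="{0,2}"])
         (use 3 in \<open>auto simp: less_Suc_eq eval_nat_numeral conj3_slot sc_slot PL_Lm\<close>)
    then have "coeffp L [x,y,z] * 2^y = coeffp L [x,y,z]" using 3 by (simp add: mnm3)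
    then show ?thesis using coeff_kill_factor mnm_ne1[OF \<open>y \<noteq> 0\<close>] a3 by blast
  next
    case 4
    then have "z \<noteq> 0" using w by (auto simp: wc_def)
    have "coeffp L [x,y,z] * mnm (\<lambda>k. [1,1,2::'a] ! k) [x,y,z] = coeffp L [x,y,z]"
      by (rule ck[where P="mk3 1 0 0 0 (1/2) 0 (3/4) 0 (1/4)" and Q="mk3 1 0 0 0 2 0 (-3) 0 4" and Zs="{0,1}"])
         (use 4 in \<open>auto simp: less_Suc_eq eval_nat_numeral conj3_slot sc_slot csimps ULm_def\<close>)
    then have "coeffp L [x,y,z] * 2^z = coeffp L [x,y,z]" using 4 by (simp add: mnm3)
    then show ?thesis using coeff_kill_factor mnm_ne1[OF \<open>z \<noteq> 0\<close>] a3 by blast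
  next
    case 5
    have "coeffp L [x,y,z] * mnm (\<lambda>k. -1) [x,y,z] = coeffp L [x,y,z]"
      by (rule ck[where P="mk3 1 0 0 0 (-1) 0 0 0 1" and Q="mk3 1 0 0 0 (-1) 0 0 0 1" and Zs="{}"])
         (auto simp: less_Suc_eq eval_nat_numeral conj3_slot sc_slot csimps ULm_def)
    moreover have "mnm (\<lambda>k. -1::'a) [x,y,z] = (-1) ^ (x+y+z)" by (simp add: mnm3 power_add)
    moreover have "(-1::'a) ^ (x+y+z) = -1" using 5 by simp
    ultimately have "coeffp L [x,y,z] * (-1) = coeffp L [x,y,z]" by simp
    then show ?thesis using coeff_kill_factor[of "coeffp L [x,y,z]" "-1"] a3 by simp
  next
    case 6
    then show ?thesis using kill110[OF hi wf rep] a3 by simp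
  next
    case 7
    have "coeffp L [1,0,1] = 0"
      by (rule kill101_gen[OF hi wf, where P="mk3 1 0 1 0 1 0 0 0 1" and Q="mk3 1 0 (-1) 0 1 0 0 0 1"])
         (use rep in \<open>simp_all add: csimps ULm_def\<close>)
    then show ?thesis using 7 a3 by simp
  next
    case 8
    have "coeffp L [0,1,1] = 0"
      by (rule kill011_gen[OF hi wf, where P="mk3 1 0 0 0 1 0 1 0 1" and Q="mk3 1 0 0 0 1 0 (-1) 0 1"])
         (use rep in \<open>simp_all add: csimps ULm_def\<close>)
    then show ?thesis using 8 a3 by simp
  qed
qed

lemma hom_c:
  shows "hom_invariant 6 (\<lambda>(Y1 :: 'a::field_char_0 mat3, Y2 :: 'a mat3, Y3 :: 'a mat3). trace (Y1 ** Y1 ** Y2 ** Y2 ** Y3 ** Y3))"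
  unfolding hom_invariant_def
proof (intro conjI allI impI)
  have "(\<lambda>(Y1 :: 'a mat3, Y2 :: 'a mat3, Y3 :: 'a mat3). trace (Y1 ** Y1 ** Y2 ** Y2 ** Y3 ** Y3))
     = (\<lambda>T. trace (fst T ** fst T ** fst (snd T) ** fst (snd T) ** snd (snd T) ** snd (snd T)))"
    by (simp add: fun_eq_iff split_def)
  also have "\<dots> \<in> poly_funs"
    by (intro poly_add poly_scal trace_poly pmat_mult pmat_fst)
  finally show "(\<lambda>(Y1 :: 'a mat3, Y2 :: 'a mat3, Y3 :: 'a mat3). trace (Y1 ** Y1 ** Y2 ** Y2 ** Y3 ** Y3)) \<in> poly_funs" .
next
  fix P :: "'a mat3" and T :: "'a triple"
  assume "invertible P"
  then obtain Q where Q: "Q ** P = mat 1"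
    and c: "conj_triple P T = ((P ** fst T) ** Q, (P ** fst (snd T)) ** Q, (P ** snd (snd T)) ** Q)"
    using conj_triple_inv by blast
  show "(case conj_triple P T of (Y1, Y2, Y3) \<Rightarrow> trace (Y1 ** Y1 ** Y2 ** Y2 ** Y3 ** Y3)) =
        (case T of (Y1, Y2, Y3) \<Rightarrow> trace (Y1 ** Y1 ** Y2 ** Y2 ** Y3 ** Y3))"
    by (simp add: c split_def conj_mul[OF Q] conj_trace[OF Q])
next
  fix t :: 'a and T :: "'a triple"
  show "(case scale_triple t T of (Y1, Y2, Y3) \<Rightarrow> trace (Y1 ** Y1 ** Y2 ** Y2 ** Y3 ** Y3)) =
        t ^ 6 * (case T of (Y1, Y2, Y3) \<Rightarrow> trace (Y1 ** Y1 ** Y2 ** Y2 ** Y3 ** Y3))"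
    by (simp add: scale_triple_eq sc_triple_def split_def smat_mult trace_smat algebra_simps eval_nat_numeral)
qed

lemma notdec_c:
  shows "\<not> decomposable 6 (\<lambda>(Y1 :: 'a::field_char_0 mat3, Y2 :: 'a mat3, Y3 :: 'a mat3). trace (Y1 ** Y1 ** Y2 ** Y2 ** Y3 ** Y3))"
proof (rule main_generic[where n=3 and Ts="\<lambda>k. [slot0 Um, slot1 Lm, slot2 (ULm::'a mat3)] ! k" and mstar="[2,2,2]" and W="Wset wc"])
  show "linfam 3 (\<lambda>k. [slot0 Um, slot1 Lm, slot2 (ULm::'a mat3)] ! k) v \<in> nil_triples" for v
    by (rule nil_slots) (use Um_cube Lm_cube ULm_cube in auto)
  show "(case linfam 3 (\<lambda>k. [slot0 Um, slot1 Lm, slot2 (ULm::'a mat3)] ! k) v of (Y1, Y2, Y3) \<Rightarrow> trace (Y1 ** Y1 ** Y2 ** Y2 ** Y3 ** Y3))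
        = trace (Um ** Um ** Lm ** Lm ** ULm ** (ULm::'a mat3)) * mnm v [2,2,2]" for v
    by (simp add: lin3_slots smat_mult trace_smat mnm3 algebra_simps power2_eq_square)
  show "trace (Um ** Um ** Lm ** Lm ** ULm ** (ULm::'a mat3)) \<noteq> 0" by (simp add: csimps ULm_def)
  show "Wset wc \<subseteq> {a. length a = 3}" by (rule Wset_len)
  show "replicate 3 0 \<notin> Wset wc" by (rule Wset_0) (auto simp: wc_def)
  show "[2,2,2] \<in> Wset wc" by (simp add: Wset_mem wc_def)
  show "\<And>a b. a \<in> Wset wc \<Longrightarrow> b \<in> below 3 a \<Longrightarrow> b \<noteq> replicate 3 0 \<Longrightarrow> b \<noteq> a \<Longrightarrow> b \<in> Wset wc \<or> map2 (-) a b \<in> Wset wc"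
    by (rule Wset_clos[where w=wc, OF wc_clos])
  show "\<And>g e L a. e < 6 \<Longrightarrow> hom_invariant e g \<Longrightarrow> wfl 3 L \<Longrightarrow> (\<forall>v. g (linfam 3 (\<lambda>k. [slot0 Um, slot1 Lm, slot2 (ULm::'a mat3)] ! k) v) = evalp L v)
                  \<Longrightarrow> a \<in> Wset wc \<Longrightarrow> coeffp L a = 0"
    by (rule kills_c) auto
qed


theorem lemma3p5:
  fixes \<alpha>1 \<alpha>2 :: "'a::field_char_0"
  assumes "alg_closed TYPE('a)"
    and "\<alpha>1 \<noteq> 0 \<or> \<alpha>2 \<noteq> 0"
  shows "indecomposable (\<lambda>(Y1 :: 'a mat3, Y2 :: 'a mat3, Y3 :: 'a mat3).
            \<alpha>1 * trace (Y1 ** Y1 ** Y2 ** Y2 ** Y3) + \<alpha>2 * trace (Y2 ** Y2 ** Y1 ** Y1 ** Y3))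
       \<and> indecomposable (\<lambda>(Y1 :: 'a mat3, Y2 :: 'a mat3, Y3 :: 'a mat3). trace (Y1 ** Y1 ** Y2 ** Y2 ** Y1 ** Y3))
       \<and> indecomposable (\<lambda>(Y1 :: 'a mat3, Y2 :: 'a mat3, Y3 :: 'a mat3). trace (Y1 ** Y1 ** Y2 ** Y2 ** Y3 ** Y3))"
  unfolding indecomposable_def
  using hom_a notdec_a[OF assms(2)] hom_b notdec_b hom_c notdec_c by blast

end
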